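(* Assume (A1) and (A2). Then for all $\mathbf{z}\in\mathbb{W}(b^* )^2$ and $\boldsymbol\vartheta\in I_{2\pi}^2$, $$|d(\mathbf{z},\boldsymbol\vartheta)|\ge C_1(\zeta(\boldsymbol\vartheta))^2.$$
   Context: $I_{2\pi}=[0,2\pi)$. Let $\Gamma=[\gamma_0,\gamma_1,\gamma_2]^T:\mathbb{R}^2\to\mathbb{R}^3$ have $2\pi$-biperiodic differentiable components, with $\Gamma|_{I_{2\pi}^2}$ parametrizing the boundary of a bounded open region in $\mathbb{R}^3$ that is $C^\infty$-diffeomorphic to a torus. For $\mathbf{a}\in\mathbb{C}^m$, $\|\mathbf{a}\|_2=(\sum_j|a_j|^2)^{1/2}$; for a matrix, $\|\cdot\|_2$ is the induced operator norm. For $\boldsymbol\theta\in\mathbb{R}^2$, $\zeta(\boldsymbol\theta)=\sqrt{\mathrm{dist}(\theta_0,2\pi\mathbb{Z})^2+\mathrm{dist}(\theta_1,2\pi\mathbb{Z})^2}$ (for $\boldsymbol\theta\in I_{2\pi}^2$ this is $\sqrt{(\min\{\theta_0,2\pi-\theta_0\})^2+(\min\{\theta_1,2\pi-\theta_1\})^2}$). For $r>0$, $\mathbb{W}(r)=\{z\in\mathbb{C}:|\mathrm{Im}\,z|<r\}$. (A1): there is $C_0>0$ with $\|\Gamma(\boldsymbol\theta)-\Gamma(\boldsymbol\eta)\|_2\ge C_0\zeta(\boldsymbol\theta-\boldsymbol\eta)$ for all $\boldsymbol\theta,\boldsymbol\eta\in I_{2\pi}^2$. (A2): there is $R_0>0$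 such that for each $j$ the ($2\pi$-biperiodic) function $\gamma_j$ extends analytically to the closure of $\mathbb{W}(R_0)^2\subset\mathbb{C}^2$ (extensions still denoted $\gamma_j$, $\Gamma$). For $\mathbf{z}=[z_0,z_1]$, $\mathrm{Re}(\mathbf{z})=[\mathrm{Re}\,z_0,\mathrm{Re}\,z_1]$; $D\gamma_j(\mathbf{z})=[\partial\gamma_j/\partial z_0,\partial\gamma_j/\partial z_1](\mathbf{z})$ is the complex gradient and $\mathbf{H}_j(\mathbf{z})$ the $2\times2$ matrix of complex second partial derivatives of $\gamma_j$. Let $M_{0,j}=\sup_{\mathbf{z}\in\mathbb{W}(R_0)^2}\|D\gamma_j(\mathbf{z})+D\gamma_j(\mathrm{Re}(\mathbf{z}))\|_2$, $M_{1,j}=\sup_{\mathbf{z}\in\mathbb{W}(R_0)^2}\|\mathbf{H}_j(\mathbf{z})\|_2$, $M_0=(\sum_{j=0}^2M_{0,j}^2)^{1/2}$, $M_1=(\sum_{j=0}^2M_{1,j}^2)^{1/2}$. Fix $b$ with $0<b<\min\{\frac{C_0^2}{\sqrt2M_0M_1},\frac{R_0}{2}\}$, let $b^*=\frac12\big(b+\min\{\frac{C_0^2}{\sqrt2M_0M_1},\frac{R_0}{2}\}\big)$ and $C_1=C_0^2-\sqrt2M_0M_1b^*$. For $\mathbf{z}\in\mathbb{W}(R_0)^2$ and $\boldsymbol\vartheta\in I_{2\pi}^2$, $d(\mathbf{z},\boldsymbol\vartheta)=\sum_{j=0}^2(\gamma_j(\mathbf{z})-\gamma_j(\mathbf{z}+\boldsymbol\vartheta))^2$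 (the analytic extension of $\|\Gamma(\boldsymbol\theta)-\Gamma(\boldsymbol\theta+\boldsymbol\vartheta)\|_2^2$). *)

theory Defs
  imports "HOL-Analysis.Analysis"
begin

definition strip2 :: "real \<Rightarrow> (complex \<times> complex) set" where
  "strip2 r = {z. \<bar>Im (fst z)\<bar> < r \<and> \<bar>Im (snd z)\<bar> < r}"

definition cstrip2 :: "real \<Rightarrow> (complex \<times> complex) set" where
  "cstrip2 r = {z. \<bar>Im (fst z)\<bar> \<le> r \<and> \<bar>Im (snd z)\<bar> \<le> r}"

definition holo2_on :: "(complex \<times> complex \<Rightarrow> complex) \<Rightarrow> (complex \<times> complex) set \<Rightarrow> bool" where
  "holo2_on f U \<longleftrightarrow> (\<forall>z\<in>U. \<exists>a b. (f has_derivative (\<lambda>w. a * fst w + b * snd w)) (at z))"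

definition analytic2_on_cstrip :: "(complex \<times> complex \<Rightarrow> complex) \<Rightarrow> real \<Rightarrow> bool" where
  "analytic2_on_cstrip f R \<longleftrightarrow> (\<exists>U. open U \<and> cstrip2 R \<subseteq> U \<and> holo2_on f U)"

definition pd0 :: "(complex \<times> complex \<Rightarrow> complex) \<Rightarrow> complex \<times> complex \<Rightarrow> complex" where
  "pd0 f z = deriv (\<lambda>w. f (w, snd z)) (fst z)"

definition pd1 :: "(complex \<times> complex \<Rightarrow> complex) \<Rightarrow> complex \<times> complex \<Rightarrow> complex" where
  "pd1 f z = deriv (\<lambda>w. f (fst z, w)) (snd z)"

definition ReZ :: "complex \<times> complex \<Rightarrow> complex \<times> complex" where
  "ReZ z = (complex_of_real (Re (fst z)), complex_of_real (Re (snd z)))"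

(* induced 2-norm of an m x n complex matrix A (entries A i j, i<m, j<n) *)
definition opnorm2 :: "(nat \<Rightarrow> nat \<Rightarrow> complex) \<Rightarrow> nat \<Rightarrow> nat \<Rightarrow> real" where
  "opnorm2 A m n = Sup {sqrt (\<Sum>i<m. (cmod (\<Sum>j<n. A i j * x j))\<^sup>2) | x.
                          sqrt (\<Sum>j<n. (cmod (x j))\<^sup>2) \<le> 1}"

(* complex gradient D f(z) as a 1 x 2 matrix *)
definition grad :: "(complex \<times> complex \<Rightarrow> complex) \<Rightarrow> complex \<times> complex \<Rightarrow> nat \<Rightarrow> nat \<Rightarrow> complex" where
  "grad f z i j = (if j = 0 then pd0 f z else pd1 f z)"

definition hess :: "(complex \<times> complex \<Rightarrow> complex) \<Rightarrow> complex \<times> complex \<Rightarrow> nat \<Rightarrow> nat \<Rightarrow> complex" where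
  "hess f z i j =
     (if i = 0 then (if j = 0 then pd0 (pd0 f) z else pd1 (pd0 f) z)
      else (if j = 0 then pd0 (pd1 f) z else pd1 (pd1 f) z))"

definition M0j :: "(complex \<times> complex \<Rightarrow> complex) \<Rightarrow> real \<Rightarrow> real" where
  "M0j f R = (SUP z\<in>strip2 R. opnorm2 (\<lambda>i j. grad f z i j + grad f (ReZ z) i j) 1 2)"

definition M1j :: "(complex \<times> complex \<Rightarrow> complex) \<Rightarrow> real \<Rightarrow> real" where
  "M1j f R = (SUP z\<in>strip2 R. opnorm2 (hess f z) 2 2)"

definition dist2pi :: "real \<Rightarrow> real" where
  "dist2pi t = Inf {\<bar>t - 2 * pi * real_of_int k\<bar> | k. True}"

definition zeta :: "real \<times> real \<Rightarrow> real" where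
  "zeta th = sqrt ((dist2pi (fst th))\<^sup>2 + (dist2pi (snd th))\<^sup>2)"

definition I2pi :: "real set" where
  "I2pi = {0..<2*pi}"

definition GammaR :: "(nat \<Rightarrow> complex \<times> complex \<Rightarrow> complex) \<Rightarrow> real \<times> real \<Rightarrow> real^3" where
  "GammaR g th = vector [Re (g 0 (complex_of_real (fst th), complex_of_real (snd th))),
                         Re (g 1 (complex_of_real (fst th), complex_of_real (snd th))),
                         Re (g 2 (complex_of_real (fst th), complex_of_real (snd th)))]"

fun pderivs :: "'n::finite list \<Rightarrow> (real^'n \<Rightarrow> real) \<Rightarrow> real^'n \<Rightarrow> real" where
  "pderivs [] f = f"
| "pderivs (i # is) f = (\<lambda>x. deriv (\<lambda>t. pderivs is f (x + t *\<^sub>R axis i 1)) 0)"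

definition smooth_on :: "(real^'n::finite) set \<Rightarrow> (real^'n \<Rightarrow> real^'m) \<Rightarrow> bool" where
  "smooth_on S f \<longleftrightarrow>
     (\<forall>k is. continuous_on S (pderivs is (\<lambda>y. f y $ k)) \<and>
        (\<forall>i. \<forall>x\<in>S. (\<lambda>t. pderivs is (\<lambda>y. f y $ k) (x + t *\<^sub>R axis i 1)) differentiable (at 0)))"

definition solid_torus :: "(real^3) set" where
  "solid_torus = {x. (sqrt ((x$1)\<^sup>2 + (x$2)\<^sup>2) - 2)\<^sup>2 + (x$3)\<^sup>2 < 1}"

definition diffeomorphic_Cinf :: "(real^3) set \<Rightarrow> (real^3) set \<Rightarrow> bool" where
  "diffeomorphic_Cinf A B \<longleftrightarrow>
     (\<exists>\<phi> \<psi>. smooth_on A \<phi> \<and> smooth_on B \<psi> \<and> \<phi> ` A = B \<and> \<psi> ` B = A \<and>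
            (\<forall>x\<in>A. \<psi> (\<phi> x) = x) \<and> (\<forall>y\<in>B. \<phi> (\<psi> y) = y))"

end

theory Submission
  imports Defs "HOL-Complex_Analysis.Complex_Analysis"
begin

lemma holo2_partials:
  assumes "holo2_on f U" "z \<in> U"
  shows "((\<lambda>u. f (u, snd z)) has_field_derivative pd0 f z) (at (fst z))"
    and "((\<lambda>v. f (fst z, v)) has_field_derivative pd1 f z) (at (snd z))"
    and "(f has_derivative (\<lambda>w. pd0 f z * fst w + pd1 f z * snd w)) (at z)"
proof -
  obtain a b where ab: "(f has_derivative (\<lambda>w. a * fst w + b * snd w)) (at z)"
    using assms unfolding holo2_on_def by blast
  have ab': "(f has_derivative (\<lambda>w. a * fst w + b * snd w)) (at (fst z, snd z))"
    using ab by simp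
  have d0: "((\<lambda>u. (u, snd z)) has_derivative (\<lambda>h. (h, 0))) (at (fst z))"
    by (auto intro!: derivative_eq_intros)
  have "((\<lambda>u. f (u, snd z)) has_derivative (\<lambda>h. a * fst (h, 0::complex) + b * snd (h, 0::complex))) (at (fst z))"
    using diff_chain_at[OF d0 ab'] by (simp add: o_def)
  then have A: "((\<lambda>u. f (u, snd z)) has_field_derivative a) (at (fst z))"
    by (simp add: has_field_derivative_def)
  have d1: "((\<lambda>v. (fst z, v)) has_derivative (\<lambda>h. (0, h))) (at (snd z))"
    by (auto intro!: derivative_eq_intros)
  have "((\<lambda>v. f (fst z, v)) has_derivative (\<lambda>h. a * fst (0::complex, h) + b * snd (0::complex, h))) (at (snd z))"
    using diff_chain_at[OF d1 ab'] by (simp add: o_def)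
  then have B: "((\<lambda>v. f (fst z, v)) has_field_derivative b) (at (snd z))"
    by (simp add: has_field_derivative_def)
  have "pd0 f z = a" unfolding pd0_def using A by (rule DERIV_imp_deriv)
  moreover have "pd1 f z = b" unfolding pd1_def using B by (rule DERIV_imp_deriv)
  ultimately show "((\<lambda>u. f (u, snd z)) has_field_derivative pd0 f z) (at (fst z))"
    "((\<lambda>v. f (fst z, v)) has_field_derivative pd1 f z) (at (snd z))"
    "(f has_derivative (\<lambda>w. pd0 f z * fst w + pd1 f z * snd w)) (at z)"
    using A B ab by auto
qed

lemma holo2_continuous_on: "holo2_on f U \<Longrightarrow> continuous_on U f"
  by (meson continuous_at_imp_continuous_on has_derivative_continuous holo2_on_def)

lemma holo2_on_subset: "holo2_on f U \<Longrightarrow> S \<subseteq> U \<Longrightarrow> holo2_on f S"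
  unfolding holo2_on_def by blast

lemma holo2_on_swap:
  assumes "holo2_on f U"
  shows "holo2_on (\<lambda>z. f (prod.swap z)) (prod.swap ` U)"
  unfolding holo2_on_def
proof
  fix z assume "z \<in> prod.swap ` U"
  then have zU: "prod.swap z \<in> U" by auto
  obtain a b where ab: "(f has_derivative (\<lambda>w. a * fst w + b * snd w)) (at (prod.swap z))"
    using assms zU unfolding holo2_on_def by blast
  have s0: "((\<lambda>z. (snd z, fst z)) has_derivative (\<lambda>w. (snd w, fst w))) (at z)"
    by (auto intro!: derivative_eq_intros)
  have e: "(\<lambda>z. (snd z, fst z)) = prod.swap" by (auto simp: fun_eq_iff)
  have s: "(prod.swap has_derivative prod.swap) (at z)"
    using s0 unfolding e .
  have "((\<lambda>z. f (prod.swap z)) has_derivative (\<lambda>w. b * fst w + a * snd w)) (at z)"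
    using diff_chain_at[OF s ab] by (simp add: o_def add.commute)
  then show "\<exists>a b. ((\<lambda>z. f (prod.swap z)) has_derivative (\<lambda>w. a * fst w + b * snd w)) (at z)"
    by blast
qed

lemma pd1_swap: "pd1 f z = pd0 (\<lambda>z. f (prod.swap z)) (prod.swap z)"
  by (simp add: pd0_def pd1_def)

lemma pd0_swap: "pd0 f z = pd1 (\<lambda>z. f (prod.swap z)) (prod.swap z)"
  by (simp add: pd0_def pd1_def)

lemma sqrt_sum_sq_le: "0 \<le> (a::real) \<Longrightarrow> 0 \<le> b \<Longrightarrow> sqrt (a\<^sup>2 + b\<^sup>2) \<le> a + b"
  by (rule real_le_lsqrt) (auto simp: power2_eq_square algebra_simps)

lemma polydisc_in_open:
  assumes "open U" "p \<in> U"
  obtains r where "r > 0" "cball (fst p) (2*r) \<times> cball (snd p) (2*r) \<subseteq> U"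
proof -
  obtain e where e: "e > 0" "ball p e \<subseteq> U" using assms open_contains_ball by blast
  define r where "r = e / 5"
  have "r > 0" using e by (simp add: r_def)
  moreover have "cball (fst p) (2*r) \<times> cball (snd p) (2*r) \<subseteq> U"
  proof
    fix w assume "w \<in> cball (fst p) (2*r) \<times> cball (snd p) (2*r)"
    then have a: "dist (fst p) (fst w) \<le> 2*r" and b: "dist (snd p) (snd w) \<le> 2*r"
      by (auto simp: mem_cball)
    have "dist p w = sqrt ((dist (fst p) (fst w))\<^sup>2 + (dist (snd p) (snd w))\<^sup>2)"
      by (metis dist_Pair_Pair prod.collapse)
    also have "\<dots> \<le> dist (fst p) (fst w) + dist (snd p) (snd w)"
      by (rule sqrt_sum_sq_le) auto
    also have "\<dots> < e" using a b e by (simp add: r_def)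
    finally show "w \<in> U" using e by auto
  qed
  ultimately show ?thesis using that by blast
qed

lemma holo2_slice0_holo:
  assumes holo: "holo2_on f U" and "\<And>u. u \<in> S \<Longrightarrow> (u, v) \<in> U"
  shows "(\<lambda>u. f (u, v)) holomorphic_on S"
  unfolding holomorphic_on_def field_differentiable_def
proof
  fix u assume "u \<in> S"
  then have "(u, v) \<in> U" using assms by auto
  from holo2_partials(1)[OF holo this]
  show "\<exists>f'. ((\<lambda>u. f (u, v)) has_field_derivative f') (at u within S)"
    by (auto intro: has_field_derivative_at_within)
qed

lemma holo2_slice0_cont:
  assumes holo: "holo2_on f U" and "\<And>u. u \<in> S \<Longrightarrow> (u, v) \<in> U"
  shows "continuous_on S (\<lambda>u. f (u, v))"
proof -
  have "continuous_on S (\<lambda>u. (u, v))" by (intro continuous_intros)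
  moreover have "(\<lambda>u. (u, v)) ` S \<subseteq> U" using assms by auto
  ultimately show ?thesis
    using continuous_on_compose2[OF holo2_continuous_on[OF holo]] by blast
qed

lemma holo2_rep0:
  assumes holo: "holo2_on f U"
    and r: "r > 0" "cball p0 (2*r) \<times> cball p1 (2*r) \<subseteq> U"
    and w: "fst w \<in> ball p0 r" "snd w \<in> cball p1 (2*r)"
  shows "pd0 f w = 1 / (2 * of_real pi * \<i>) * integral {0..1} (\<lambda>t. f (circlepath p0 (2*r) t, snd w) /
            (circlepath p0 (2*r) t - fst w)^2 * vector_derivative (circlepath p0 (2*r)) (at t))"
proof -
  have sub: "(u, snd w) \<in> U" if "u \<in> cball p0 (2*r)" for u
    using r w that by auto
  have cont: "continuous_on (cball p0 (2*r)) (\<lambda>u. f (u, snd w))"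
    by (rule holo2_slice0_cont[OF holo sub])
  have hol: "(\<lambda>u. f (u, snd w)) holomorphic_on ball p0 (2*r)"
    by (rule holo2_slice0_holo[OF holo sub]) auto
  have w0: "fst w \<in> ball p0 (2*r)" using w r by (auto simp: mem_ball)
  from Cauchy_derivative_integral_circlepath(2)[OF cont hol w0]
  have "pd0 f w = 1 / (2 * of_real pi * \<i>) * contour_integral (circlepath p0 (2*r)) (\<lambda>u. f (u, snd w) / (u - fst w)^2)"
    unfolding pd0_def by (rule DERIV_imp_deriv)
  then show ?thesis by (simp add: contour_integral_integral)
qed

lemma cp_dist: "R \<ge> 0 \<Longrightarrow> dist p0 (circlepath p0 R t) = R"
  by (simp add: circlepath dist_norm norm_mult)

lemma cp_cont: "continuous_on S (\<lambda>x. circlepath p0 R (g x))" if "continuous_on S g"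
  unfolding circlepath using that by (intro continuous_intros)

lemma cp_vd: "vector_derivative (circlepath z R) (at t) = 2 * of_real pi * \<i> * of_real R * exp (2 * of_real pi * \<i> * of_real t)"
  by (simp add: vector_derivative_circlepath)

lemma cp_denom:
  assumes "r > 0" "fst w \<in> ball p0 r"
  shows "circlepath p0 (2*r) t - fst w \<noteq> 0"
proof
  assume "circlepath p0 (2*r) t - fst w = 0"
  then have "dist p0 (fst w) = 2*r" using cp_dist[of "2*r" p0 t] assms by simp
  then show False using assms by (simp add: mem_ball)
qed

lemma holo2_pd0_cont:
  assumes holo: "holo2_on f U" and U: "open U"
  shows "continuous_on U (pd0 f)"
proof (rule continuous_at_imp_continuous_on, rule ballI)
  fix p assume pU: "p \<in> U"
  obtain r where r: "r > 0" "cball (fst p) (2*r) \<times> cball (snd p) (2*r) \<subseteq> U"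
    using polydisc_in_open[OF U pU] by blast
  define D where "D = ball (fst p) r \<times> ball (snd p) r"
  have oD: "open D" unfolding D_def by (intro open_Times open_ball)
  have pD: "p \<in> D" unfolding D_def using r by (auto simp: mem_Times_iff)
  define cp where "cp = circlepath (fst p) (2*r)"
  define K where "K = (\<lambda>x::(complex\<times>complex)\<times>real. f (cp (snd x), snd (fst x)) / (cp (snd x) - fst (fst x))^2 *
      (2 * of_real pi * \<i> * of_real (2*r) * exp (2 * of_real pi * \<i> * of_real (snd x))))"
  have eq: "pd0 f w = 1 / (2 * of_real pi * \<i>) * integral (cbox 0 1) (\<lambda>t. K (w, t))" if "w \<in> D" for w
  proof -
    have "fst w \<in> ball (fst p) r" "snd w \<in> cball (snd p) (2*r)" using that r
      by (auto simp: D_def mem_ball mem_cball)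
    from holo2_rep0[OF holo r this] show ?thesis
      by (simp add: K_def cp_def cp_vd cbox_interval)
  qed
  have contK: "continuous_on (D \<times> cbox 0 1) K"
  proof -
    have c1: "continuous_on (D \<times> cbox 0 1) (\<lambda>x. (cp (snd x), snd (fst x)))"
      unfolding cp_def by (intro continuous_intros cp_cont)
    have i1: "(\<lambda>x. (cp (snd x), snd (fst x))) ` (D \<times> cbox 0 1) \<subseteq> U"
    proof safe
      fix w t assume "w \<in> D" "t \<in> cbox (0::real) 1"
      then show "(cp (snd (w, t)), snd (fst (w, t))) \<in> U"
        using r cp_dist[of "2*r" "fst p" t] by (auto simp: D_def cp_def mem_ball mem_cball)
    qed
    have c2: "continuous_on (D \<times> cbox 0 1) (\<lambda>x. f (cp (snd x), snd (fst x)))"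
      using continuous_on_compose2[OF holo2_continuous_on[OF holo] c1 i1] .
    have nz: "\<forall>x\<in>D \<times> cbox 0 1. (cp (snd x) - fst (fst x))^2 \<noteq> 0"
    proof
      fix x assume "x \<in> D \<times> cbox (0::real) 1"
      then have "fst (fst x) \<in> ball (fst p) r" by (auto simp: D_def mem_Times_iff)
      from cp_denom[OF r(1), of "fst x", OF this]
      show "(cp (snd x) - fst (fst x))^2 \<noteq> 0" by (simp add: cp_def)
    qed
    show ?thesis unfolding K_def
      by (intro continuous_intros c2 nz) (auto simp: cp_def intro!: cp_cont continuous_intros)
  qed
  have "continuous_on D (\<lambda>w. integral (cbox 0 1) (\<lambda>t. K (w, t)))"
    by (rule integral_continuous_on_param) (use contK in \<open>simp add: case_prod_beta'\<close>)
  then have "continuous_on D (\<lambda>w. 1 / (2 * of_real pi * \<i>) * integral (cbox 0 1) (\<lambda>t. K (w, t)))"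
    by (intro continuous_intros)
  then have "continuous_on D (pd0 f)"
    using eq by (metis (no_types, lifting) continuous_on_cong)
  then show "isCont (pd0 f) p"
    using oD pD continuous_on_eq_continuous_at by blast
qed

lemma swap_image_eq: "prod.swap ` U = prod.swap -` U"
proof (intro set_eqI iffI)
  fix z assume "z \<in> prod.swap ` U" then show "z \<in> prod.swap -` U" by auto
next
  fix z assume "z \<in> prod.swap -` U"
  then have "prod.swap (prod.swap z) \<in> prod.swap ` U" by blast
  then show "z \<in> prod.swap ` U" by simp
qed

lemma open_swap_image: "open U \<Longrightarrow> open (prod.swap ` (U::(complex\<times>complex) set))"
  unfolding swap_image_eq
  by (rule continuous_open_vimage) (auto intro!: continuous_intros simp: prod.swap_def)

lemma holo2_pd1_cont:
  assumes holo: "holo2_on f U" and U: "open U"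
  shows "continuous_on U (pd1 f)"
proof -
  let ?g = "\<lambda>z. f (prod.swap z)"
  have "continuous_on (prod.swap ` U) (pd0 ?g)"
    by (rule holo2_pd0_cont[OF holo2_on_swap[OF holo] open_swap_image[OF U]])
  then have "continuous_on U (\<lambda>z. pd0 ?g (prod.swap z))"
    by (rule continuous_on_compose2) (auto intro!: continuous_intros simp: prod.swap_def)
  then show ?thesis by (simp add: pd1_swap[symmetric])
qed

lemma holo2_pd0_holo:
  assumes holo: "holo2_on f U" and U: "open U"
  shows "holo2_on (pd0 f) U"
  unfolding holo2_on_def
proof
  fix p assume pU: "p \<in> U"
  obtain r where r: "r > 0" "cball (fst p) (2*r) \<times> cball (snd p) (2*r) \<subseteq> U"
    using polydisc_in_open[OF U pU] by blast
  define X where "X = ball (fst p) r"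
  define Y where "Y = ball (snd p) r"
  define cp where "cp = circlepath (fst p) (2*r)"
  define vd where "vd = (\<lambda>t::real. 2 * of_real pi * \<i> * of_real (2*r) * exp (2 * of_real pi * \<i> * of_real t))"
  define c where "c = 1 / (2 * of_real pi * \<i>)"
  have oX: "open X" and oY: "open Y" and cY: "convex Y" by (auto simp: X_def Y_def)
  have pX: "fst p \<in> X" and pY: "snd p \<in> Y" using r by (auto simp: X_def Y_def)
  have cpc: "continuous_on S (\<lambda>x. cp (g x))" if "continuous_on S g" for S and g :: "'a::topological_space \<Rightarrow> real"
    unfolding cp_def by (rule cp_cont[OF that])
  have inU: "(cp t, v) \<in> U" if "v \<in> Y" for t v
    using r that cp_dist[of "2*r" "fst p" t] by (auto simp: Y_def cp_def mem_ball mem_cball)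
  have nz: "cp t - x \<noteq> 0" if "x \<in> X" for t x
    using cp_denom[OF r(1), of "(x, x)"] that by (simp add: X_def cp_def)
  have rep: "pd0 f (x, v) = c * integral (cbox 0 1) (\<lambda>t. f (cp t, v) / (cp t - x)^2 * vd t)"
    if "x \<in> X" "v \<in> Y" for x v
  proof -
    have "fst (x, v) \<in> ball (fst p) r" "snd (x, v) \<in> cball (snd p) (2*r)" using that r
      by (auto simp: X_def Y_def mem_ball mem_cball)
    from holo2_rep0[OF holo r this] show ?thesis
      by (simp add: c_def cp_def vd_def cp_vd cbox_interval)
  qed
  have pd1c: "continuous_on U (pd1 f)" by (rule holo2_pd1_cont[OF holo U])
  have fcont: "continuous_on U f" by (rule holo2_continuous_on[OF holo])
  have fyD: "((\<lambda>v. pd0 f (x, v)) has_field_derivative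
      c * integral (cbox 0 1) (\<lambda>t. pd1 f (cp t, y) / (cp t - x)^2 * vd t)) (at y)"
    if xX: "x \<in> X" and yY: "y \<in> Y" for x y
  proof -
    have d: "((\<lambda>v. f (cp t, v) / (cp t - x)^2 * vd t) has_field_derivative
              pd1 f (cp t, v) / (cp t - x)^2 * vd t) (at v within Y)"
      if "v \<in> Y" "t \<in> cbox 0 1" for v t
    proof -
      from holo2_partials(2)[OF holo inU[OF that(1), of t]]
      have "((\<lambda>v. f (cp t, v)) has_field_derivative pd1 f (cp t, v)) (at v)" by simp
      then show ?thesis
        by (rule has_field_derivative_at_within[OF DERIV_cmult_right[OF DERIV_cdivide]])
    qed
    have i: "(\<lambda>t. f (cp t, v) / (cp t - x)^2 * vd t) integrable_on cbox 0 1" if "v \<in> Y" for v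
    proof (rule integrable_continuous)
      have c1: "continuous_on (cbox 0 1) (\<lambda>t. f (cp t, v))"
        by (rule continuous_on_compose2[OF fcont]) (auto intro!: continuous_intros cpc inU[OF that])
      show "continuous_on (cbox 0 1) (\<lambda>t. f (cp t, v) / (cp t - x)^2 * vd t)"
        unfolding vd_def using nz[OF xX]
        by (intro continuous_intros c1 cpc) auto
    qed
    have cc: "continuous_on (Y \<times> cbox 0 1) (\<lambda>(v, t). pd1 f (cp t, v) / (cp t - x)^2 * vd t)"
    proof -
      have c1: "continuous_on (Y \<times> cbox 0 1) (\<lambda>z. pd1 f (cp (snd z), fst z))"
        by (rule continuous_on_compose2[OF pd1c]) (auto intro!: continuous_intros cpc inU)
      have "continuous_on (Y \<times> cbox 0 1) (\<lambda>z. pd1 f (cp (snd z), fst z) / (cp (snd z) - x)^2 * vd (snd z))"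
        unfolding vd_def using nz[OF xX]
        by (intro continuous_intros c1 cpc) auto
      then show ?thesis by (simp add: case_prod_beta')
    qed
    from leibniz_rule_field_derivative[OF d i cc yY cY]
    have "((\<lambda>v. integral (cbox 0 1) (\<lambda>t. f (cp t, v) / (cp t - x)^2 * vd t)) has_field_derivative
           integral (cbox 0 1) (\<lambda>t. pd1 f (cp t, y) / (cp t - x)^2 * vd t)) (at y)"
      using at_within_open[OF yY oY] by simp
    then have "((\<lambda>v. c * integral (cbox 0 1) (\<lambda>t. f (cp t, v) / (cp t - x)^2 * vd t)) has_field_derivative
           c * integral (cbox 0 1) (\<lambda>t. pd1 f (cp t, y) / (cp t - x)^2 * vd t)) (at y)"
      by (rule DERIV_cmult)
    then show ?thesis
      by (rule has_field_derivative_transform_within_open[OF _ oY yY]) (simp add: rep[OF xX])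
  qed
  have pd10: "pd1 (pd0 f) (x, y) = c * integral (cbox 0 1) (\<lambda>t. pd1 f (cp t, y) / (cp t - x)^2 * vd t)"
    if "x \<in> X" "y \<in> Y" for x y
    using DERIV_imp_deriv[OF fyD[OF that]] unfolding pd1_def[of "pd0 f" "(x, y)"] fst_conv snd_conv .
  have fy: "((\<lambda>v. pd0 f (x, v)) has_derivative blinfun_apply (blinfun_mult_right (pd1 (pd0 f) (x, y)))) (at y within Y)"
    if "x \<in> X" "y \<in> Y" for x y
    using fyD[OF that] pd10[OF that] has_field_derivative_at_within
    by (metis has_field_derivative_eq_has_derivative_blinfun)
  have contXY: "continuous_on (X \<times> Y) (pd1 (pd0 f))"
  proof -
    have c1: "continuous_on ((X \<times> Y) \<times> cbox 0 1) (\<lambda>z. pd1 f (cp (snd z), snd (fst z)))"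
      by (rule continuous_on_compose2[OF pd1c]) (auto intro!: continuous_intros cpc inU)
    have "continuous_on ((X \<times> Y) \<times> cbox 0 1) (\<lambda>z. pd1 f (cp (snd z), snd (fst z)) / (cp (snd z) - fst (fst z))^2 * vd (snd z))"
      unfolding vd_def using nz
      by (intro continuous_intros c1 cpc) auto
    then have "continuous_on (X \<times> Y) (\<lambda>w. integral (cbox 0 1) (\<lambda>t. pd1 f (cp t, snd w) / (cp t - fst w)^2 * vd t))"
      by (intro integral_continuous_on_param) (simp add: case_prod_beta')
    then have "continuous_on (X \<times> Y) (\<lambda>w. c * integral (cbox 0 1) (\<lambda>t. pd1 f (cp t, snd w) / (cp t - fst w)^2 * vd t))"
      by (intro continuous_intros)
    then show ?thesis
      by (rule continuous_on_eq) (auto simp: pd10)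
  qed
  have fy_cont: "continuous (at (fst p, snd p) within X \<times> Y) (\<lambda>(x, y). blinfun_mult_right (pd1 (pd0 f) (x, y)))"
  proof -
    have "continuous_on (X \<times> Y) (\<lambda>z. blinfun_mult_right (pd1 (pd0 f) z))"
      by (intro continuous_intros contXY)
    then have "continuous (at (fst p, snd p) within X \<times> Y) (\<lambda>z. blinfun_mult_right (pd1 (pd0 f) z))"
      using pX pY continuous_on_eq_continuous_within by blast
    then show ?thesis by (simp add: case_prod_beta')
  qed
  have fx: "((\<lambda>u. pd0 f (u, snd p)) has_derivative (*) (pd0 (pd0 f) p)) (at (fst p) within X)"
  proof -
    define S where "S = {u. (u, snd p) \<in> U}"
    have oS: "open S" unfolding S_def
      using continuous_open_vimage[OF U, of "\<lambda>u. (u, snd p)"] by (auto simp: vimage_def intro!: continuous_intros)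
    have pS: "fst p \<in> S" using pU by (simp add: S_def)
    have "(\<lambda>u. f (u, snd p)) holomorphic_on S"
      by (rule holo2_slice0_holo[OF holo]) (simp add: S_def)
    then have "deriv (\<lambda>u. f (u, snd p)) holomorphic_on S" using oS by (rule holomorphic_deriv)
    then have "deriv (\<lambda>u. f (u, snd p)) field_differentiable at (fst p)"
      using oS pS holomorphic_on_imp_differentiable_at by blast
    then obtain D where D: "((\<lambda>u. pd0 f (u, snd p)) has_field_derivative D) (at (fst p))"
      by (auto simp: field_differentiable_def pd0_def)
    have "pd0 (pd0 f) p = D" unfolding pd0_def[of "pd0 f"] using D by (rule DERIV_imp_deriv)
    then show ?thesis using D has_field_derivative_at_within
      by (metis has_field_derivative_def)
  qed
  from has_derivative_partialsI[where f="\<lambda>x y. pd0 f (x, y)", OF fx fy fy_cont pY cY]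
  have "((\<lambda>(x, y). pd0 f (x, y)) has_derivative
          (\<lambda>(tx, ty). pd0 (pd0 f) p * tx + blinfun_apply (blinfun_mult_right (pd1 (pd0 f) (fst p, snd p))) ty))
          (at (fst p, snd p) within X \<times> Y)" by blast
  moreover have "at (fst p, snd p) within X \<times> Y = at p"
  proof -
    have "(fst p, snd p) \<in> X \<times> Y" using pX pY by (simp add: mem_Times_iff)
    from at_within_open[OF this open_Times[OF oX oY]] show ?thesis by simp
  qed
  ultimately have "(pd0 f has_derivative (\<lambda>w. pd0 (pd0 f) p * fst w + pd1 (pd0 f) p * snd w)) (at p)"
    by (simp add: case_prod_beta')
  then show "\<exists>a b. (pd0 f has_derivative (\<lambda>w. a * fst w + b * snd w)) (at p)" by blast
qed

lemma holo2_pd1_holo: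
  assumes holo: "holo2_on f U" and U: "open U"
  shows "holo2_on (pd1 f) U"
proof -
  let ?g = "\<lambda>z. f (prod.swap z)"
  have h: "holo2_on (pd0 ?g) (prod.swap ` U)"
    by (rule holo2_pd0_holo[OF holo2_on_swap[OF holo] open_swap_image[OF U]])
  have "holo2_on (\<lambda>z. pd0 ?g (prod.swap z)) (prod.swap ` prod.swap ` U)"
    by (rule holo2_on_swap[OF h])
  moreover have "prod.swap ` prod.swap ` U = U" by (simp add: image_comp)
  ultimately show ?thesis by (simp add: pd1_swap[symmetric])
qed

lemma open_strip2: "open (strip2 R)"
  unfolding strip2_def
  by (intro open_Collect_conj open_Collect_less continuous_intros)

lemma strip2_subset_cstrip2: "strip2 R \<subseteq> cstrip2 R"
  by (auto simp: strip2_def cstrip2_def)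

lemma strip2_shift: "w \<in> strip2 R \<Longrightarrow> w + (complex_of_real a, complex_of_real b) \<in> strip2 R"
  by (simp add: strip2_def)

lemma strip2_shift': "w \<in> strip2 R \<Longrightarrow> w - (complex_of_real a, complex_of_real b) \<in> strip2 R"
  by (simp add: strip2_def)

lemma holo2_shift:
  assumes "holo2_on f U" "\<And>w. w \<in> S \<Longrightarrow> w + c \<in> U"
  shows "holo2_on (\<lambda>w. f (w + c)) S"
  unfolding holo2_on_def
proof
  fix w assume "w \<in> S"
  then obtain a b where ab: "(f has_derivative (\<lambda>w. a * fst w + b * snd w)) (at (w + c))"
    using assms unfolding holo2_on_def by blast
  have s: "((\<lambda>w. w + c) has_derivative (\<lambda>h. h)) (at w)"
    by (auto intro!: derivative_eq_intros)
  from diff_chain_at[OF s ab]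
  show "\<exists>a b. ((\<lambda>w. f (w + c)) has_derivative (\<lambda>w. a * fst w + b * snd w)) (at w)"
    by (auto simp: o_def)
qed

lemma holo2_diff:
  assumes "holo2_on f S" "holo2_on g S"
  shows "holo2_on (\<lambda>w. f w - g w) S"
  unfolding holo2_on_def
proof
  fix w assume "w \<in> S"
  obtain a b where ab: "(f has_derivative (\<lambda>w. a * fst w + b * snd w)) (at w)"
    using assms(1) \<open>w \<in> S\<close> unfolding holo2_on_def by blast
  obtain a' b' where ab': "(g has_derivative (\<lambda>w. a' * fst w + b' * snd w)) (at w)"
    using assms(2) \<open>w \<in> S\<close> unfolding holo2_on_def by blast
  have eq: "(\<lambda>w. (a * fst w + b * snd w) - (a' * fst w + b' * snd w)) = (\<lambda>w. (a - a') * fst w + (b - b') * snd w)"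
    by (rule ext) (simp add: algebra_simps)
  from has_derivative_diff[OF ab ab']
  have "((\<lambda>w. f w - g w) has_derivative (\<lambda>w. (a - a') * fst w + (b - b') * snd w)) (at w)"
    unfolding eq .
  then show "\<exists>a b. ((\<lambda>w. f w - g w) has_derivative (\<lambda>w. a * fst w + b * snd w)) (at w)" by blast
qed

lemma holo2_slice1_holo:
  assumes holo: "holo2_on f U" and "\<And>v. v \<in> S \<Longrightarrow> (u, v) \<in> U"
  shows "(\<lambda>v. f (u, v)) holomorphic_on S"
  unfolding holomorphic_on_def field_differentiable_def
proof
  fix v assume "v \<in> S"
  then have "(u, v) \<in> U" using assms by auto
  from holo2_partials(2)[OF holo this]
  show "\<exists>f'. ((\<lambda>v. f (u, v)) has_field_derivative f') (at v within S)"
    by (auto intro: has_field_derivative_at_within)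
qed

lemma zero_islimpt_Reals: "(0::complex) islimpt \<real>"
  unfolding islimpt_approachable
proof (intro allI impI)
  fix e :: real assume "e > 0"
  have A: "complex_of_real (e/2) \<in> \<real>" by simp
  have B: "complex_of_real (e/2) \<noteq> 0" using \<open>e > 0\<close> by simp
  have C: "dist (complex_of_real (e/2)) 0 < e"
  proof -
    have "dist (complex_of_real (e/2)) 0 = norm (complex_of_real (e/2))" by (metis dist_0_norm dist_commute)
    also have "\<dots> = \<bar>e/2\<bar>" by (rule norm_of_real)
    finally show ?thesis using \<open>e > 0\<close> by simp
  qed
  show "\<exists>x'::complex\<in>\<real>. x' \<noteq> 0 \<and> dist x' 0 < e"
    using A B C by (intro bexI[where x="complex_of_real (e/2)"] conjI)
qed

lemma holo2_zero_on_strip: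
  assumes holo: "holo2_on h (strip2 R)" and z: "\<And>x y. h (complex_of_real x, complex_of_real y) = 0"
    and w: "w \<in> strip2 R"
  shows "h w = 0"
proof -
  define S1 where "S1 = {u::complex. \<bar>Im u\<bar> < R}"
  have S1eq: "S1 = {u. Im u < R} \<inter> {u. Im u > -R}" by (auto simp: S1_def)
  have oS1: "open S1" unfolding S1eq by (intro open_Int open_halfspace_Im_lt open_halfspace_Im_gt)
  have cS1: "connected S1" unfolding S1eq
    by (intro convex_connected convex_Int convex_halfspace_Im_lt convex_halfspace_Im_gt)
  have R: "R > 0" using w by (auto simp: strip2_def)
  have RS: "\<real> \<subseteq> S1" using R by (auto simp: S1_def Reals_def)
  have 0: "0 \<in> S1" using R by (simp add: S1_def)
  have step1: "h (u, complex_of_real y) = 0" if "u \<in> S1" for u y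
  proof -
    have hol: "(\<lambda>u. h (u, complex_of_real y)) holomorphic_on S1"
      by (rule holo2_slice0_holo[OF holo]) (auto simp: S1_def strip2_def R)
    have zz: "h (x, complex_of_real y) = 0" if "x \<in> \<real>" for x
      using that by (rule Reals_cases) (simp add: z)
    show ?thesis
      using analytic_continuation[OF hol oS1 cS1 RS 0 zero_islimpt_Reals zz \<open>u \<in> S1\<close>] .
  qed
  have step2: "h (u, v) = 0" if "u \<in> S1" "v \<in> S1" for u v
  proof -
    have hol: "(\<lambda>v. h (u, v)) holomorphic_on S1"
      by (rule holo2_slice1_holo[OF holo]) (use that in \<open>auto simp: S1_def strip2_def\<close>)
    have zz: "h (u, x) = 0" if "x \<in> \<real>" for x
      using that by (rule Reals_cases) (simp add: step1 \<open>u \<in> S1\<close>)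
    show ?thesis
      using analytic_continuation[OF hol oS1 cS1 RS 0 zero_islimpt_Reals zz \<open>v \<in> S1\<close>] .
  qed
  show ?thesis using step2[of "fst w" "snd w"] w by (simp add: S1_def strip2_def)
qed

lemma pd_shift_periodic:
  assumes holo: "holo2_on g S" and oS: "open S"
    and c: "\<And>w. w \<in> S \<Longrightarrow> w + c \<in> S" "\<And>w. w \<in> S \<Longrightarrow> g (w + c) = g w" and w: "w \<in> S"
  shows "pd0 g (w + c) = pd0 g w" and "pd1 g (w + c) = pd1 g w"
proof -
  have wc: "w + c \<in> S" using c w by auto
  have "((\<lambda>u. g (u, snd (w + c))) has_field_derivative pd0 g (w + c)) (at (fst w + fst c))"
    using holo2_partials(1)[OF holo wc] by simp
  then have "((\<lambda>u. g (u + fst c, snd w + snd c)) has_field_derivative pd0 g (w + c)) (at (fst w))"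
    by (simp add: DERIV_shift)
  moreover have "open {u. (u, snd w) \<in> S}"
    using continuous_open_vimage[OF oS, of "\<lambda>u. (u, snd w)"] by (auto simp: vimage_def intro!: continuous_intros)
  moreover have "fst w \<in> {u. (u, snd w) \<in> S}" using w by simp
  moreover have "g (u + fst c, snd w + snd c) = g (u, snd w)" if "u \<in> {u. (u, snd w) \<in> S}" for u
    using c(2)[of "(u, snd w)"] that by (simp add: plus_prod_def)
  ultimately have "((\<lambda>u. g (u, snd w)) has_field_derivative pd0 g (w + c)) (at (fst w))"
    by (rule has_field_derivative_transform_within_open)
  then show "pd0 g (w + c) = pd0 g w" unfolding pd0_def[of g w] by (simp add: DERIV_imp_deriv)
next
  have wc: "w + c \<in> S" using c w by auto
  have "((\<lambda>v. g (fst (w + c), v)) has_field_derivative pd1 g (w + c)) (at (snd w + snd c))"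
    using holo2_partials(2)[OF holo wc] by simp
  then have "((\<lambda>v. g (fst w + fst c, v + snd c)) has_field_derivative pd1 g (w + c)) (at (snd w))"
    by (simp add: DERIV_shift)
  moreover have "open {v. (fst w, v) \<in> S}"
    using continuous_open_vimage[OF oS, of "\<lambda>v. (fst w, v)"] by (auto simp: vimage_def intro!: continuous_intros)
  moreover have "snd w \<in> {v. (fst w, v) \<in> S}" using w by simp
  moreover have "g (fst w + fst c, v + snd c) = g (fst w, v)" if "v \<in> {v. (fst w, v) \<in> S}" for v
    using c(2)[of "(fst w, v)"] that by (simp add: plus_prod_def)
  ultimately have "((\<lambda>v. g (fst w, v)) has_field_derivative pd1 g (w + c)) (at (snd w))"
    by (rule has_field_derivative_transform_within_open)
  then show "pd1 g (w + c) = pd1 g w" unfolding pd1_def[of g w] by (simp add: DERIV_imp_deriv)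
qed

lemma mvt01:
  fixes \<phi> :: "real \<Rightarrow> complex"
  assumes d: "\<And>t. t \<in> {0..1} \<Longrightarrow> (\<phi> has_vector_derivative \<phi>' t) (at t)"
    and b: "\<And>t. t \<in> {0..1} \<Longrightarrow> norm (\<phi>' t) \<le> B"
  shows "norm (\<phi> 1 - \<phi> 0) \<le> B"
proof -
  have "norm (\<phi> 1 - \<phi> 0) \<le> B * norm (1 - 0::real)"
  proof (rule differentiable_bound[of "{0..1}" \<phi> "\<lambda>t h. h *\<^sub>R \<phi>' t" B 1 0])
    show "convex {0..1::real}" by simp
    show "(\<phi> has_derivative (\<lambda>h. h *\<^sub>R \<phi>' t)) (at t within {0..1})" if "t \<in> {0..1}" for t
      using d[OF that] unfolding has_vector_derivative_def by (rule has_derivative_at_withinI)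
    show "onorm (\<lambda>h. h *\<^sub>R \<phi>' t) \<le> B" if "t \<in> {0..1}" for t
    proof (rule onorm_le)
      fix h :: real
      have "norm (h *\<^sub>R \<phi>' t) = \<bar>h\<bar> * norm (\<phi>' t)" by simp
      also have "\<dots> \<le> \<bar>h\<bar> * B" by (rule mult_left_mono[OF b[OF that]]) simp
      finally show "norm (h *\<^sub>R \<phi>' t) \<le> B * norm h" by (simp add: mult.commute)
    qed
  qed auto
  then show ?thesis by simp
qed

lemma cs2:
  fixes u0 u1 :: complex and p q :: real
  shows "cmod (u0 * p + u1 * q) \<le> sqrt ((cmod u0)\<^sup>2 + (cmod u1)\<^sup>2) * sqrt (p\<^sup>2 + q\<^sup>2)"
proof -
  define a where "a = cmod u0"
  define b where "b = cmod u1"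
  have "cmod (u0 * p + u1 * q) \<le> cmod (u0 * p) + cmod (u1 * q)" by (rule norm_triangle_ineq)
  also have "\<dots> = a * \<bar>p\<bar> + b * \<bar>q\<bar>" by (simp add: a_def b_def norm_mult)
  also have "\<dots> \<le> sqrt ((a\<^sup>2 + b\<^sup>2) * (\<bar>p\<bar>\<^sup>2 + \<bar>q\<bar>\<^sup>2))"
  proof (rule real_le_rsqrt)
    have "(a * \<bar>p\<bar> + b * \<bar>q\<bar>)\<^sup>2 + (a * \<bar>q\<bar> - b * \<bar>p\<bar>)\<^sup>2 = (a\<^sup>2 + b\<^sup>2) * (\<bar>p\<bar>\<^sup>2 + \<bar>q\<bar>\<^sup>2)"
      by (simp add: power2_eq_square algebra_simps)
    moreover have "0 \<le> (a * \<bar>q\<bar> - b * \<bar>p\<bar>)\<^sup>2" by simp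
    ultimately show "(a * \<bar>p\<bar> + b * \<bar>q\<bar>)\<^sup>2 \<le> (a\<^sup>2 + b\<^sup>2) * (\<bar>p\<bar>\<^sup>2 + \<bar>q\<bar>\<^sup>2)" by linarith
  qed
  also have "\<dots> = sqrt ((cmod u0)\<^sup>2 + (cmod u1)\<^sup>2) * sqrt (p\<^sup>2 + q\<^sup>2)"
    by (simp add: a_def b_def real_sqrt_mult)
  finally show ?thesis .
qed

lemma cs3:
  fixes a b :: "nat \<Rightarrow> real"
  shows "(\<Sum>j<3. a j * b j) \<le> sqrt (\<Sum>j<3. (a j)\<^sup>2) * sqrt (\<Sum>j<3. (b j)\<^sup>2)"
proof -
  have "(\<Sum>j<3. a j * b j) \<le> sqrt ((\<Sum>j<3. (a j)\<^sup>2) * (\<Sum>j<3. (b j)\<^sup>2))"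
    by (rule real_le_rsqrt) (rule Cauchy_Schwarz_ineq_sum)
  then show ?thesis by (simp add: real_sqrt_mult)
qed

definition opset :: "(nat \<Rightarrow> nat \<Rightarrow> complex) \<Rightarrow> nat \<Rightarrow> nat \<Rightarrow> real set" where
  "opset A m n = {sqrt (\<Sum>i<m. (cmod (\<Sum>j<n. A i j * x j))\<^sup>2) | x. sqrt (\<Sum>j<n. (cmod (x j))\<^sup>2) \<le> 1}"

lemma opnorm2_opset: "opnorm2 A m n = Sup (opset A m n)"
  by (simp add: opnorm2_def opset_def)

lemma opset_bound:
  assumes "s \<in> opset A m n"
  shows "s \<le> (\<Sum>i<m. \<Sum>j<n. cmod (A i j))"
proof -
  obtain x where s: "s = sqrt (\<Sum>i<m. (cmod (\<Sum>j<n. A i j * x j))\<^sup>2)"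
    and x: "sqrt (\<Sum>j<n. (cmod (x j))\<^sup>2) \<le> 1"
    using assms by (auto simp: opset_def)
  have xj: "cmod (x j) \<le> 1" if "j < n" for j
  proof -
    have "(cmod (x j))\<^sup>2 \<le> (\<Sum>j<n. (cmod (x j))\<^sup>2)"
      using that by (intro member_le_sum) auto
    also have "\<dots> \<le> 1" using x by (simp add: real_sqrt_le_1_iff)
    finally have "(cmod (x j))\<^sup>2 \<le> 1\<^sup>2" by simp
    then show ?thesis by (rule power2_le_imp_le) simp
  qed
  have row: "cmod (\<Sum>j<n. A i j * x j) \<le> (\<Sum>j<n. cmod (A i j))" for i
  proof -
    have "cmod (\<Sum>j<n. A i j * x j) \<le> (\<Sum>j<n. cmod (A i j * x j))" by (rule norm_sum)
    also have "\<dots> \<le> (\<Sum>j<n. cmod (A i j))"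
      by (rule sum_mono) (auto simp: norm_mult intro!: mult_left_le xj)
    finally show ?thesis .
  qed
  have "s = L2_set (\<lambda>i. cmod (\<Sum>j<n. A i j * x j)) {..<m}" by (simp add: s L2_set_def)
  also have "\<dots> \<le> (\<Sum>i<m. cmod (\<Sum>j<n. A i j * x j))" by (rule L2_set_le_sum) simp
  also have "\<dots> \<le> (\<Sum>i<m. \<Sum>j<n. cmod (A i j))" by (rule sum_mono) (rule row)
  finally show ?thesis .
qed

lemma opset_zero: "0 \<in> opset A m n"
proof -
  have "sqrt (\<Sum>i<m. (cmod (\<Sum>j<n. A i j * (\<lambda>_. 0) j))\<^sup>2) \<in> opset A m n"
    unfolding opset_def by (intro CollectI exI[of _ "\<lambda>_. 0"]) simp
  then show ?thesis by simp
qed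

lemma opset_bdd: "bdd_above (opset A m n)"
  using opset_bound by (intro bdd_aboveI) blast

lemma opnorm2_le: "opnorm2 A m n \<le> (\<Sum>i<m. \<Sum>j<n. cmod (A i j))"
  unfolding opnorm2_opset
proof (rule cSup_least)
  show "opset A m n \<noteq> {}" using opset_zero by blast
qed (rule opset_bound)

lemma opnorm2_nonneg: "0 \<le> opnorm2 A m n"
  unfolding opnorm2_opset using opset_zero opset_bdd by (rule cSup_upper)

lemma opnorm2_apply:
  "sqrt (\<Sum>i<m. (cmod (\<Sum>j<n. A i j * x j))\<^sup>2) \<le> opnorm2 A m n * sqrt (\<Sum>j<n. (cmod (x j))\<^sup>2)"
proof (cases "sqrt (\<Sum>j<n. (cmod (x j))\<^sup>2) = 0")
  case True
  then have "(\<Sum>j<n. (cmod (x j))\<^sup>2) = 0" by simp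
  then have "\<forall>j\<in>{..<n}. (cmod (x j))\<^sup>2 = 0" by (subst (asm) sum_nonneg_eq_0_iff) auto
  then have "\<forall>j<n. x j = 0" by simp
  then have "(\<Sum>j<n. A i j * x j) = 0" for i by simp
  then show ?thesis using True by simp
next
  case False
  define N where "N = sqrt (\<Sum>j<n. (cmod (x j))\<^sup>2)"
  have "(\<Sum>j<n. (cmod (x j))\<^sup>2) \<ge> 0" by (intro sum_nonneg) simp
  then have Npos: "N > 0" using False unfolding N_def by simp
  define y where "y = (\<lambda>j. x j / complex_of_real N)"
  have ynorm: "sqrt (\<Sum>j<n. (cmod (y j))\<^sup>2) = 1"
  proof -
    have "(\<Sum>j<n. (cmod (y j))\<^sup>2) = (\<Sum>j<n. (cmod (x j))\<^sup>2) / N\<^sup>2"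
      using Npos by (simp add: y_def norm_divide power_divide sum_divide_distrib)
    also have "\<dots> = 1" using Npos by (simp add: N_def)
    finally show ?thesis by simp
  qed
  have "sqrt (\<Sum>i<m. (cmod (\<Sum>j<n. A i j * y j))\<^sup>2) \<in> opset A m n"
    unfolding opset_def using ynorm by auto
  then have le: "sqrt (\<Sum>i<m. (cmod (\<Sum>j<n. A i j * y j))\<^sup>2) \<le> opnorm2 A m n"
    unfolding opnorm2_opset using opset_bdd by (rule cSup_upper)
  have "sqrt (\<Sum>i<m. (cmod (\<Sum>j<n. A i j * y j))\<^sup>2) = sqrt (\<Sum>i<m. (cmod (\<Sum>j<n. A i j * x j))\<^sup>2) / N"
  proof -
    have eq: "(\<Sum>j<n. A i j * y j) = (\<Sum>j<n. A i j * x j) / complex_of_real N" for i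
      by (simp add: y_def sum_divide_distrib)
    have "(\<Sum>i<m. (cmod (\<Sum>j<n. A i j * y j))\<^sup>2) = (\<Sum>i<m. (cmod ((\<Sum>j<n. A i j * x j) / complex_of_real N))\<^sup>2)"
      by (simp only: eq)
    also have "\<dots> = (\<Sum>i<m. (cmod (\<Sum>j<n. A i j * x j))\<^sup>2 / N\<^sup>2)"
      using Npos by (simp add: norm_divide power_divide)
    also have "\<dots> = (\<Sum>i<m. (cmod (\<Sum>j<n. A i j * x j))\<^sup>2) / N\<^sup>2"
      by (rule sum_divide_distrib[symmetric])
    finally have "(\<Sum>i<m. (cmod (\<Sum>j<n. A i j * y j))\<^sup>2) = (\<Sum>i<m. (cmod (\<Sum>j<n. A i j * x j))\<^sup>2) / N\<^sup>2" .
    then show ?thesis using Npos by (simp add: real_sqrt_divide)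
  qed
  with le have "sqrt (\<Sum>i<m. (cmod (\<Sum>j<n. A i j * x j))\<^sup>2) / N \<le> opnorm2 A m n" by simp
  then show ?thesis using Npos by (simp add: N_def[symmetric] divide_le_eq)
qed

lemma periodic_nat:
  fixes c :: "'a::real_vector"
  assumes S: "\<And>w. w \<in> S \<Longrightarrow> w + c \<in> S" "\<And>w. w \<in> S \<Longrightarrow> w - c \<in> S"
    and g: "\<And>w. w \<in> S \<Longrightarrow> g (w + c) = g w" and w: "w \<in> S"
  shows "w + real n *\<^sub>R c \<in> S \<and> g (w + real n *\<^sub>R c) = g w"
    and "w - real n *\<^sub>R c \<in> S \<and> g (w - real n *\<^sub>R c) = g w"
proof -
  show "w + real n *\<^sub>R c \<in> S \<and> g (w + real n *\<^sub>R c) = g w"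
  proof (induction n)
    case 0 then show ?case using w by simp
  next
    case (Suc n)
    have e: "w + real (Suc n) *\<^sub>R c = (w + real n *\<^sub>R c) + c" by (simp add: algebra_simps)
    from Suc have h1: "w + real n *\<^sub>R c \<in> S" and h2: "g (w + real n *\<^sub>R c) = g w" by auto
    show ?case unfolding e using S(1)[OF h1] g[OF h1] h2 by simp
  qed
  show "w - real n *\<^sub>R c \<in> S \<and> g (w - real n *\<^sub>R c) = g w"
  proof (induction n)
    case 0 then show ?case using w by simp
  next
    case (Suc n)
    have e: "w - real (Suc n) *\<^sub>R c = (w - real n *\<^sub>R c) - c" by (simp add: algebra_simps)
    from Suc have h1: "w - real n *\<^sub>R c \<in> S" and h2: "g (w - real n *\<^sub>R c) = g w" by auto
    have h3: "w - real n *\<^sub>R c - c \<in> S" by (rule S(2)[OF h1])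
    have "g (((w - real n *\<^sub>R c) - c) + c) = g ((w - real n *\<^sub>R c) - c)"
      by (rule g[OF h3])
    then show ?case unfolding e using h3 h2 by simp
  qed
qed

lemma periodic_int:
  fixes c :: "'a::real_vector"
  assumes S: "\<And>w. w \<in> S \<Longrightarrow> w + c \<in> S" "\<And>w. w \<in> S \<Longrightarrow> w - c \<in> S"
    and g: "\<And>w. w \<in> S \<Longrightarrow> g (w + c) = g w" and w: "w \<in> S"
  shows "w + real_of_int k *\<^sub>R c \<in> S \<and> g (w + real_of_int k *\<^sub>R c) = g w"
proof (cases "k \<ge> 0")
  case True
  then obtain n where "k = int n" using zero_le_imp_eq_int by blast
  then show ?thesis using periodic_nat(1)[where S=S and c=c and g=g and w=w and n=n, OF S g w] by simp
next
  case False
  then have "0 \<le> - k" by simp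
  then obtain n where "- k = int n" using zero_le_imp_eq_int by blast
  then have "k = - int n" by simp
  then show ?thesis using periodic_nat(2)[where S=S and c=c and g=g and w=w and n=n, OF S g w] by simp
qed

lemma floor_mod_bounds:
  assumes "P > (0::real)"
  shows "0 \<le> a - P * of_int \<lfloor>a / P\<rfloor>" and "a - P * of_int \<lfloor>a / P\<rfloor> < P"
proof -
  have "of_int \<lfloor>a / P\<rfloor> \<le> a / P" by (rule of_int_floor_le)
  then have "P * of_int \<lfloor>a / P\<rfloor> \<le> P * (a / P)" using assms by (intro mult_left_mono) auto
  then show "0 \<le> a - P * of_int \<lfloor>a / P\<rfloor>" using assms by simp
  have "a / P < of_int \<lfloor>a / P\<rfloor> + 1" by (rule real_of_int_floor_add_one_gt)
  then have "P * (a / P) < P * (of_int \<lfloor>a / P\<rfloor> + 1)" using assms by (intro mult_strict_left_mono) auto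
  then show "a - P * of_int \<lfloor>a / P\<rfloor> < P" using assms by (simp add: algebra_simps)
qed

lemma periodic_bounded:
  fixes g :: "complex \<times> complex \<Rightarrow> 'b::real_normed_vector"
  assumes cont: "continuous_on U g" and sub: "cstrip2 R \<subseteq> U"
    and p0: "\<And>w. w \<in> strip2 R \<Longrightarrow> g (w + (complex_of_real (2*pi), 0)) = g w"
    and p1: "\<And>w. w \<in> strip2 R \<Longrightarrow> g (w + (0, complex_of_real (2*pi))) = g w"
  shows "\<exists>B. \<forall>w\<in>strip2 R. norm (g w) \<le> B"
proof -
  define K where "K = {w::complex\<times>complex. 0 \<le> Re (fst w) \<and> Re (fst w) \<le> 2*pi \<and> 0 \<le> Re (snd w) \<and> Re (snd w) \<le> 2*pi
     \<and> \<bar>Im (fst w)\<bar> \<le> R \<and> \<bar>Im (snd w)\<bar> \<le> R}"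
  have clK: "closed K" unfolding K_def
    by (intro closed_Collect_conj closed_Collect_le continuous_intros)
  have bK: "bounded K"
  proof -
    have "norm w \<le> 2 * (2*pi) + 2 * \<bar>R\<bar>" if "w \<in> K" for w
    proof -
      have "norm w = sqrt ((cmod (fst w))\<^sup>2 + (cmod (snd w))\<^sup>2)"
        by (metis norm_Pair prod.collapse)
      also have "\<dots> \<le> cmod (fst w) + cmod (snd w)" by (rule sqrt_sum_sq_le) auto
      also have "\<dots> \<le> (\<bar>Re (fst w)\<bar> + \<bar>Im (fst w)\<bar>) + (\<bar>Re (snd w)\<bar> + \<bar>Im (snd w)\<bar>)"
        by (intro add_mono cmod_le)
      also have "\<dots> \<le> 2 * (2*pi) + 2 * \<bar>R\<bar>" using that by (auto simp: K_def)
      finally show ?thesis .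
    qed
    then show ?thesis unfolding bounded_iff by blast
  qed
  have cK: "compact K" using clK bK by (simp add: compact_eq_bounded_closed)
  have KU: "K \<subseteq> U" using sub by (auto simp: K_def cstrip2_def)
  have "compact (g ` K)" by (rule compact_continuous_image[OF continuous_on_subset[OF cont KU] cK])
  then have "bounded (g ` K)" by (rule compact_imp_bounded)
  then obtain B where B0: "\<forall>y\<in>g ` K. norm y \<le> B" unfolding bounded_iff by blast
  have B: "norm (g x) \<le> B" if "x \<in> K" for x using B0 that by blast
  have "norm (g w) \<le> B" if w: "w \<in> strip2 R" for w
  proof -
    define c0 where "c0 = (complex_of_real (2*pi), 0::complex)"
    define c1 where "c1 = (0::complex, complex_of_real (2*pi))"
    define k0 where "k0 = \<lfloor>Re (fst w) / (2*pi)\<rfloor>"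
    define k1 where "k1 = \<lfloor>Re (snd w) / (2*pi)\<rfloor>"
    have S0: "v + c0 \<in> strip2 R" "v - c0 \<in> strip2 R" if "v \<in> strip2 R" for v
      using that strip2_shift strip2_shift' unfolding c0_def by (metis of_real_0)+
    have S1: "v + c1 \<in> strip2 R" "v - c1 \<in> strip2 R" if "v \<in> strip2 R" for v
      using that strip2_shift strip2_shift' unfolding c1_def by (metis of_real_0)+
    have g0: "g (v + c0) = g v" if "v \<in> strip2 R" for v using p0 that by (simp add: c0_def)
    have g1: "g (v + c1) = g v" if "v \<in> strip2 R" for v using p1 that by (simp add: c1_def)
    define w1 where "w1 = w + real_of_int (- k0) *\<^sub>R c0"
    have w1: "w1 \<in> strip2 R \<and> g w1 = g w"
      unfolding w1_def by (rule periodic_int[where S="strip2 R" and c=c0 and g=g, OF S0 g0 w])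
    define w2 where "w2 = w1 + real_of_int (- k1) *\<^sub>R c1"
    have w2: "w2 \<in> strip2 R \<and> g w2 = g w1"
      unfolding w2_def by (rule periodic_int[where S="strip2 R" and c=c1 and g=g, OF S1 g1]) (use w1 in auto)
    have fw2: "fst w2 = fst w - complex_of_real (2*pi * of_int k0)"
      by (simp add: w2_def w1_def c0_def c1_def scaleR_conv_of_real)
    have sw2: "snd w2 = snd w - complex_of_real (2*pi * of_int k1)"
      by (simp add: w2_def w1_def c0_def c1_def scaleR_conv_of_real)
    have "w2 \<in> K"
      using floor_mod_bounds[of "2*pi" "Re (fst w)"] floor_mod_bounds[of "2*pi" "Re (snd w)"] w2
      unfolding K_def k0_def[symmetric] k1_def[symmetric]
      by (auto simp: fw2 sw2 strip2_def)
    then have "norm (g w2) \<le> B" by (rule B)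
    then show ?thesis using w1 w2 by simp
  qed
  then show ?thesis by blast
qed

lemma dist2pi_set_shift: "{\<bar>t + 2 * pi * real_of_int m - 2 * pi * real_of_int k\<bar> | k. True} = {\<bar>t - 2 * pi * real_of_int k\<bar> | k. True}"
proof (intro set_eqI iffI)
  fix x assume "x \<in> {\<bar>t + 2 * pi * real_of_int m - 2 * pi * real_of_int k\<bar> | k. True}"
  then obtain k where "x = \<bar>t + 2 * pi * real_of_int m - 2 * pi * real_of_int k\<bar>" by blast
  then have "x = \<bar>t - 2 * pi * real_of_int (k - m)\<bar>" by (simp add: algebra_simps)
  then show "x \<in> {\<bar>t - 2 * pi * real_of_int k\<bar> | k. True}" by blast
next
  fix x assume "x \<in> {\<bar>t - 2 * pi * real_of_int k\<bar> | k. True}"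
  then obtain k where "x = \<bar>t - 2 * pi * real_of_int k\<bar>" by blast
  then have "x = \<bar>t + 2 * pi * real_of_int m - 2 * pi * real_of_int (k + m)\<bar>" by (simp add: algebra_simps)
  then show "x \<in> {\<bar>t + 2 * pi * real_of_int m - 2 * pi * real_of_int k\<bar> | k. True}" by blast
qed

lemma dist2pi_shift: "dist2pi (t + 2 * pi * real_of_int m) = dist2pi t"
  unfolding dist2pi_def using dist2pi_set_shift by simp

lemma dist2pi_minus: "dist2pi (- t) = dist2pi t"
proof -
  have "{\<bar>- t - 2 * pi * real_of_int k\<bar> | k. True} = {\<bar>t - 2 * pi * real_of_int k\<bar> | k. True}"
  proof (intro set_eqI iffI)
    fix x assume "x \<in> {\<bar>- t - 2 * pi * real_of_int k\<bar> | k. True}"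
    then obtain k where "x = \<bar>- t - 2 * pi * real_of_int k\<bar>" by blast
    then have "x = \<bar>t - 2 * pi * real_of_int (- k)\<bar>" by (simp add: abs_minus_commute)
    then show "x \<in> {\<bar>t - 2 * pi * real_of_int k\<bar> | k. True}" by blast
  next
    fix x assume "x \<in> {\<bar>t - 2 * pi * real_of_int k\<bar> | k. True}"
    then obtain k where "x = \<bar>t - 2 * pi * real_of_int k\<bar>" by blast
    then have "x = \<bar>- t - 2 * pi * real_of_int (- k)\<bar>" by (simp add: abs_minus_commute)
    then show "x \<in> {\<bar>- t - 2 * pi * real_of_int k\<bar> | k. True}" by blast
  qed
  then show ?thesis unfolding dist2pi_def by simp
qed

lemma dist2pi_small:
  assumes "\<bar>t\<bar> \<le> pi"
  shows "dist2pi t = \<bar>t\<bar>"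
  unfolding dist2pi_def
proof (rule cInf_eq_minimum)
  show "\<bar>t\<bar> \<in> {\<bar>t - 2 * pi * real_of_int k\<bar> | k. True}"
    by (rule CollectI, rule exI[of _ 0]) simp
  fix x assume "x \<in> {\<bar>t - 2 * pi * real_of_int k\<bar> | k. True}"
  then obtain k where x: "x = \<bar>t - 2 * pi * real_of_int k\<bar>" by blast
  show "\<bar>t\<bar> \<le> x"
  proof (cases "k = 0")
    case True then show ?thesis by (simp add: x)
  next
    case False
    then have "\<bar>real_of_int k\<bar> \<ge> 1" by linarith
    then have "2 * pi * \<bar>real_of_int k\<bar> \<ge> 2 * pi" using pi_gt_zero by simp
    then have "\<bar>2 * pi * real_of_int k\<bar> \<ge> 2 * pi" by (simp add: abs_mult)
    then show ?thesis unfolding x using assms by linarith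
  qed
qed

lemma dist2pi_I2pi:
  assumes "t \<in> I2pi"
  shows "dist2pi t = \<bar>if t \<le> pi then t else t - 2*pi\<bar>" and "\<bar>if t \<le> pi then t else t - 2*pi\<bar> \<le> pi"
proof -
  show b: "\<bar>if t \<le> pi then t else t - 2*pi\<bar> \<le> pi" using assms by (auto simp: I2pi_def)
  have "dist2pi t = dist2pi (if t \<le> pi then t else t - 2*pi)"
    using dist2pi_shift[of "t - 2*pi" 1] by auto
  then show "dist2pi t = \<bar>if t \<le> pi then t else t - 2*pi\<bar>" using dist2pi_small[OF b] by simp
qed

lemma path_deriv:
  assumes holo: "holo2_on f S" and in_S: "a + t *\<^sub>R v \<in> S"
  shows "((\<lambda>t. f (a + t *\<^sub>R v)) has_vector_derivative
           (pd0 f (a + t *\<^sub>R v) * fst v + pd1 f (a + t *\<^sub>R v) * snd v)) (at t)"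
proof -
  have p: "((\<lambda>t. a + t *\<^sub>R v) has_derivative (\<lambda>h. h *\<^sub>R v)) (at t)"
    by (auto intro!: derivative_eq_intros)
  from diff_chain_at[OF p holo2_partials(3)[OF holo in_S]]
  have "((\<lambda>t. f (a + t *\<^sub>R v)) has_derivative
     (\<lambda>h. pd0 f (a + t *\<^sub>R v) * fst (h *\<^sub>R v) + pd1 f (a + t *\<^sub>R v) * snd (h *\<^sub>R v))) (at t)"
    by (simp add: o_def)
  moreover have "(\<lambda>h. pd0 f (a + t *\<^sub>R v) * fst (h *\<^sub>R v) + pd1 f (a + t *\<^sub>R v) * snd (h *\<^sub>R v)) =
      (\<lambda>h. h *\<^sub>R (pd0 f (a + t *\<^sub>R v) * fst v + pd1 f (a + t *\<^sub>R v) * snd v))"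
    by (rule ext) (simp add: scaleR_conv_of_real algebra_simps)
  ultimately show ?thesis unfolding has_vector_derivative_def by simp
qed

lemma grad_apply:
  "cmod ((pd0 f w + pd0 f w') * complex_of_real a + (pd1 f w + pd1 f w') * complex_of_real b)
     \<le> opnorm2 (\<lambda>i j. grad f w i j + grad f w' i j) 1 2 * sqrt (a\<^sup>2 + b\<^sup>2)"
proof -
  define x :: "nat \<Rightarrow> complex" where "x = (\<lambda>j. if j = 0 then complex_of_real a else complex_of_real b)"
  from opnorm2_apply[where m=1 and n=2 and A="\<lambda>i j. grad f w i j + grad f w' i j" and x=x]
  show ?thesis by (simp add: x_def numeral_2_eq_2 grad_def)
qed

lemma hess_apply:
  "sqrt ((cmod (hess f w 0 0 * v0 + hess f w 0 1 * v1))\<^sup>2 + (cmod (hess f w 1 0 * v0 + hess f w 1 1 * v1))\<^sup>2)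
     \<le> opnorm2 (hess f w) 2 2 * sqrt ((cmod v0)\<^sup>2 + (cmod v1)\<^sup>2)"
proof -
  define x :: "nat \<Rightarrow> complex" where "x = (\<lambda>j. if j = 0 then v0 else v1)"
  from opnorm2_apply[where m=2 and n=2 and A="hess f w" and x=x]
  show ?thesis by (simp add: x_def numeral_2_eq_2)
qed

lemma strip2_R_pos: "z \<in> strip2 R \<Longrightarrow> R > 0"
  by (auto simp: strip2_def)

lemma ReZ_in_strip2: "z \<in> strip2 R \<Longrightarrow> ReZ z \<in> strip2 R"
  by (auto simp: strip2_def ReZ_def)

lemma shift_in_strip2:
  "z \<in> strip2 R \<Longrightarrow> z + t *\<^sub>R (complex_of_real t0, complex_of_real t1) \<in> strip2 R"
  by (auto simp: strip2_def scaleR_conv_of_real)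

lemma ReZ_shift: "ReZ (z + t *\<^sub>R (complex_of_real t0, complex_of_real t1)) = ReZ z + t *\<^sub>R (complex_of_real t0, complex_of_real t1)"
  by (simp add: ReZ_def scaleR_conv_of_real)

lemma comp_BA:
  assumes holo: "holo2_on f (strip2 R)"
    and M0: "\<And>w. w \<in> strip2 R \<Longrightarrow> opnorm2 (\<lambda>i j. grad f w i j + grad f (ReZ w) i j) 1 2 \<le> M"
    and z: "z \<in> strip2 R"
  shows "cmod ((f z - f (z + (complex_of_real t0, complex_of_real t1))) + (f (ReZ z) - f (ReZ z + (complex_of_real t0, complex_of_real t1))))
           \<le> M * sqrt (t0\<^sup>2 + t1\<^sup>2)"
proof -
  define \<theta> where "\<theta> = (complex_of_real t0, complex_of_real t1)"
  define \<phi> where "\<phi> = (\<lambda>t::real. f (z + t *\<^sub>R \<theta>) + f (ReZ z + t *\<^sub>R \<theta>))"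
  define \<phi>' where "\<phi>' = (\<lambda>t::real. (pd0 f (z + t *\<^sub>R \<theta>) * fst \<theta> + pd1 f (z + t *\<^sub>R \<theta>) * snd \<theta>) +
      (pd0 f (ReZ z + t *\<^sub>R \<theta>) * fst \<theta> + pd1 f (ReZ z + t *\<^sub>R \<theta>) * snd \<theta>))"
  have inS1: "z + t *\<^sub>R \<theta> \<in> strip2 R" for t unfolding \<theta>_def by (rule shift_in_strip2[OF z])
  have inS2: "ReZ z + t *\<^sub>R \<theta> \<in> strip2 R" for t unfolding \<theta>_def by (rule shift_in_strip2[OF ReZ_in_strip2[OF z]])
  have d: "(\<phi> has_vector_derivative \<phi>' t) (at t)" for t
    unfolding \<phi>_def \<phi>'_def
    by (intro has_vector_derivative_add path_deriv[OF holo inS1] path_deriv[OF holo inS2])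
  have b: "norm (\<phi>' t) \<le> M * sqrt (t0\<^sup>2 + t1\<^sup>2)" for t
  proof -
    have "\<phi>' t = (pd0 f (z + t *\<^sub>R \<theta>) + pd0 f (ReZ (z + t *\<^sub>R \<theta>))) * complex_of_real t0 +
                 (pd1 f (z + t *\<^sub>R \<theta>) + pd1 f (ReZ (z + t *\<^sub>R \<theta>))) * complex_of_real t1"
      unfolding \<phi>'_def \<theta>_def ReZ_shift by (simp add: algebra_simps)
    then have "norm (\<phi>' t) \<le> opnorm2 (\<lambda>i j. grad f (z + t *\<^sub>R \<theta>) i j + grad f (ReZ (z + t *\<^sub>R \<theta>)) i j) 1 2 * sqrt (t0\<^sup>2 + t1\<^sup>2)"
      using grad_apply by simp
    also have "\<dots> \<le> M * sqrt (t0\<^sup>2 + t1\<^sup>2)"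
      by (rule mult_right_mono[OF M0[OF inS1]]) simp
    finally show ?thesis .
  qed
  have "norm (\<phi> 1 - \<phi> 0) \<le> M * sqrt (t0\<^sup>2 + t1\<^sup>2)"
    by (rule mvt01[OF d b])
  moreover have "\<phi> 1 - \<phi> 0 = - ((f z - f (z + \<theta>)) + (f (ReZ z) - f (ReZ z + \<theta>)))"
    by (simp add: \<phi>_def)
  ultimately show ?thesis unfolding \<theta>_def by (simp only: norm_minus_cancel)
qed

lemma comp_BB:
  assumes holo: "holo2_on f (strip2 R)" and holo0: "holo2_on (pd0 f) (strip2 R)" and holo1: "holo2_on (pd1 f) (strip2 R)"
    and M1: "\<And>w. w \<in> strip2 R \<Longrightarrow> opnorm2 (hess f w) 2 2 \<le> M"
    and z: "z \<in> strip2 R"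
  shows "cmod ((f z - f (z + (complex_of_real t0, complex_of_real t1))) - (f (ReZ z) - f (ReZ z + (complex_of_real t0, complex_of_real t1))))
           \<le> M * sqrt ((Im (fst z))\<^sup>2 + (Im (snd z))\<^sup>2) * sqrt (t0\<^sup>2 + t1\<^sup>2)"
proof -
  define \<theta> where "\<theta> = (complex_of_real t0, complex_of_real t1)"
  define \<iota> where "\<iota> = (\<i> * complex_of_real (Im (fst z)), \<i> * complex_of_real (Im (snd z)))"
  define yn where "yn = sqrt ((Im (fst z))\<^sup>2 + (Im (snd z))\<^sup>2)"
  define zt where "zt = sqrt (t0\<^sup>2 + t1\<^sup>2)"
  have M0: "0 \<le> M" using M1[OF z] opnorm2_nonneg[of "hess f z" 2 2] by linarith
  define k where "k = (\<lambda>t::real. f (z + t *\<^sub>R \<theta>) - f (ReZ z + t *\<^sub>R \<theta>))"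
  define G where "G = (\<lambda>w. pd0 f w * fst \<theta> + pd1 f w * snd \<theta>)"
  define k' where "k' = (\<lambda>t::real. G (z + t *\<^sub>R \<theta>) - G (ReZ z + t *\<^sub>R \<theta>))"
  have inS1: "z + t *\<^sub>R \<theta> \<in> strip2 R" for t unfolding \<theta>_def by (rule shift_in_strip2[OF z])
  have inS2: "ReZ z + t *\<^sub>R \<theta> \<in> strip2 R" for t unfolding \<theta>_def by (rule shift_in_strip2[OF ReZ_in_strip2[OF z]])
  have d: "(k has_vector_derivative k' t) (at t)" for t
    unfolding k_def k'_def G_def
    by (intro has_vector_derivative_diff path_deriv[OF holo inS1] path_deriv[OF holo inS2])
  have b: "norm (k' t) \<le> M * yn * zt" if "t \<in> {0..1}" for t
  proof -
    define q where "q = ReZ z + t *\<^sub>R \<theta>"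
    have qi: "q + \<iota> = z + t *\<^sub>R \<theta>"
    proof (cases z)
      case (Pair a b)
      have "q + \<iota> = ((complex_of_real (Re a) + \<i> * complex_of_real (Im a)) + complex_of_real t * complex_of_real t0,
                       (complex_of_real (Re b) + \<i> * complex_of_real (Im b)) + complex_of_real t * complex_of_real t1)"
        by (simp add: Pair q_def ReZ_def \<iota>_def \<theta>_def scaleR_conv_of_real algebra_simps)
      also have "\<dots> = z + t *\<^sub>R \<theta>"
        by (simp add: Pair \<theta>_def scaleR_conv_of_real complex_eq[symmetric])
      finally show ?thesis .
    qed
    have inR: "q + s *\<^sub>R \<iota> \<in> strip2 R" if "s \<in> {0..1}" for s
    proof -
      have "\<bar>s * Im (fst z)\<bar> \<le> \<bar>Im (fst z)\<bar>" "\<bar>s * Im (snd z)\<bar> \<le> \<bar>Im (snd z)\<bar>"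
        using that by (auto simp: abs_mult intro!: mult_left_le_one_le)
      then show ?thesis using z
        by (auto simp: strip2_def q_def ReZ_def \<iota>_def \<theta>_def scaleR_conv_of_real)
    qed
    define \<mu> where "\<mu> = (\<lambda>s::real. G (q + s *\<^sub>R \<iota>))"
    define \<mu>' where "\<mu>' = (\<lambda>s::real. (pd0 (pd0 f) (q + s *\<^sub>R \<iota>) * fst \<iota> + pd1 (pd0 f) (q + s *\<^sub>R \<iota>) * snd \<iota>) * fst \<theta>
       + (pd0 (pd1 f) (q + s *\<^sub>R \<iota>) * fst \<iota> + pd1 (pd1 f) (q + s *\<^sub>R \<iota>) * snd \<iota>) * snd \<theta>)"
    have dm: "(\<mu> has_vector_derivative \<mu>' s) (at s)" if "s \<in> {0..1}" for s
      unfolding \<mu>_def \<mu>'_def G_def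
      by (intro has_vector_derivative_add has_vector_derivative_mult_left
            path_deriv[OF holo0 inR[OF that]] path_deriv[OF holo1 inR[OF that]])
    have bm: "norm (\<mu>' s) \<le> M * yn * zt" if "s \<in> {0..1}" for s
    proof -
      define w where "w = q + s *\<^sub>R \<iota>"
      have "\<mu>' s = (hess f w 0 0 * fst \<iota> + hess f w 0 1 * snd \<iota>) * complex_of_real t0
                   + (hess f w 1 0 * fst \<iota> + hess f w 1 1 * snd \<iota>) * complex_of_real t1"
        by (simp add: \<mu>'_def hess_def w_def \<theta>_def)
      also have "cmod \<dots> \<le> sqrt ((cmod (hess f w 0 0 * fst \<iota> + hess f w 0 1 * snd \<iota>))\<^sup>2
                 + (cmod (hess f w 1 0 * fst \<iota> + hess f w 1 1 * snd \<iota>))\<^sup>2) * zt"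
        unfolding zt_def by (rule cs2)
      also have "\<dots> \<le> (opnorm2 (hess f w) 2 2 * sqrt ((cmod (fst \<iota>))\<^sup>2 + (cmod (snd \<iota>))\<^sup>2)) * zt"
        by (rule mult_right_mono[OF hess_apply]) (simp add: zt_def)
      also have "sqrt ((cmod (fst \<iota>))\<^sup>2 + (cmod (snd \<iota>))\<^sup>2) = yn"
        by (simp add: \<iota>_def yn_def norm_mult)
      also have "opnorm2 (hess f w) 2 2 * yn * zt \<le> M * yn * zt"
        using M1[OF inR[OF that]] by (intro mult_right_mono) (auto simp: w_def yn_def zt_def)
      finally show ?thesis .
    qed
    have "norm (\<mu> 1 - \<mu> 0) \<le> M * yn * zt" by (rule mvt01[OF dm bm])
    moreover have "\<mu> 1 - \<mu> 0 = k' t"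
    proof -
      have "\<mu> 1 = G (z + t *\<^sub>R \<theta>)" unfolding \<mu>_def using qi by simp
      moreover have "\<mu> 0 = G (ReZ z + t *\<^sub>R \<theta>)" unfolding \<mu>_def q_def by simp
      ultimately show ?thesis unfolding k'_def by simp
    qed
    ultimately show ?thesis by simp
  qed
  have "norm (k 1 - k 0) \<le> M * yn * zt" by (rule mvt01[OF d b])
  moreover have "k 1 - k 0 = - ((f z - f (z + \<theta>)) - (f (ReZ z) - f (ReZ z + \<theta>)))"
    by (simp add: k_def)
  ultimately show ?thesis unfolding \<theta>_def yn_def zt_def by (simp only: norm_minus_cancel)
qed

definition per2 :: "real \<Rightarrow> (complex \<times> complex \<Rightarrow> complex) \<Rightarrow> bool" where
  "per2 R g \<longleftrightarrow> (\<forall>w\<in>strip2 R. g (w + (complex_of_real (2*pi), 0)) = g w \<and> g (w + (0, complex_of_real (2*pi))) = g w)"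

lemma strip2_c0: "w \<in> strip2 R \<Longrightarrow> w + (complex_of_real (2*pi), 0) \<in> strip2 R"
  using strip2_shift[of w R "2*pi" 0] by simp
lemma strip2_c1: "w \<in> strip2 R \<Longrightarrow> w + (0, complex_of_real (2*pi)) \<in> strip2 R"
  using strip2_shift[of w R 0 "2*pi"] by simp
lemma strip2_c0': "w \<in> strip2 R \<Longrightarrow> w - (complex_of_real (2*pi), 0) \<in> strip2 R"
  using strip2_shift'[of w R "2*pi" 0] by simp
lemma strip2_c1': "w \<in> strip2 R \<Longrightarrow> w - (0, complex_of_real (2*pi)) \<in> strip2 R"
  using strip2_shift'[of w R 0 "2*pi"] by simp

lemma per2_pd:
  assumes holo: "holo2_on g (strip2 R)" and p: "per2 R g"
  shows "per2 R (pd0 g)" "per2 R (pd1 g)"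
proof -
  have g0: "g (w + (complex_of_real (2*pi), 0)) = g w" if "w \<in> strip2 R" for w using p that by (auto simp: per2_def)
  have g1: "g (w + (0, complex_of_real (2*pi))) = g w" if "w \<in> strip2 R" for w using p that by (auto simp: per2_def)
  note A = pd_shift_periodic[OF holo open_strip2 strip2_c0 g0]
  note B = pd_shift_periodic[OF holo open_strip2 strip2_c1 g1]
  show "per2 R (pd0 g)" unfolding per2_def using A(1) B(1) by blast
  show "per2 R (pd1 g)" unfolding per2_def using A(2) B(2) by blast
qed

lemma per2_bounded:
  assumes "continuous_on U g" "cstrip2 R \<subseteq> U" "per2 R g"
  shows "\<exists>B. \<forall>w\<in>strip2 R. cmod (g w) \<le> B"
  using assms by (intro periodic_bounded[of U g R]) (auto simp: per2_def)

lemma per2_real_reduce: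
  assumes p: "per2 R g" and R: "R > 0"
  shows "g (complex_of_real x, complex_of_real y) =
         g (complex_of_real (x - 2*pi * of_int \<lfloor>x / (2*pi)\<rfloor>), complex_of_real (y - 2*pi * of_int \<lfloor>y / (2*pi)\<rfloor>))"
proof -
  define c0 where "c0 = (complex_of_real (2*pi), 0::complex)"
  define c1 where "c1 = (0::complex, complex_of_real (2*pi))"
  have g0: "g (w + c0) = g w" if "w \<in> strip2 R" for w using p that by (auto simp: per2_def c0_def)
  have g1: "g (w + c1) = g w" if "w \<in> strip2 R" for w using p that by (auto simp: per2_def c1_def)
  have S0: "w + c0 \<in> strip2 R" "w - c0 \<in> strip2 R" if "w \<in> strip2 R" for w
    using that strip2_c0 strip2_c0' by (auto simp: c0_def)
  have S1: "w + c1 \<in> strip2 R" "w - c1 \<in> strip2 R" if "w \<in> strip2 R" for w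
    using that strip2_c1 strip2_c1' by (auto simp: c1_def)
  have w: "(complex_of_real x, complex_of_real y) \<in> strip2 R" using R by (simp add: strip2_def)
  define w1 where "w1 = (complex_of_real x, complex_of_real y) + real_of_int (- \<lfloor>x / (2*pi)\<rfloor>) *\<^sub>R c0"
  have w1: "w1 \<in> strip2 R \<and> g w1 = g (complex_of_real x, complex_of_real y)"
    unfolding w1_def by (rule periodic_int[where S="strip2 R" and c=c0 and g=g, OF S0 g0 w])
  define w2 where "w2 = w1 + real_of_int (- \<lfloor>y / (2*pi)\<rfloor>) *\<^sub>R c1"
  have w2: "w2 \<in> strip2 R \<and> g w2 = g w1"
    unfolding w2_def by (rule periodic_int[where S="strip2 R" and c=c1 and g=g, OF S1 g1]) (use w1 in auto)
  have "w2 = (complex_of_real (x - 2*pi * of_int \<lfloor>x / (2*pi)\<rfloor>), complex_of_real (y - 2*pi * of_int \<lfloor>y / (2*pi)\<rfloor>))"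
    by (simp add: w2_def w1_def c0_def c1_def scaleR_conv_of_real)
  then show ?thesis using w1 w2 by simp
qed

lemma component_facts:
  assumes an: "analytic2_on_cstrip f R"
    and per0: "\<And>x y. f (complex_of_real (x + 2*pi), complex_of_real y) = f (complex_of_real x, complex_of_real y)"
    and per1: "\<And>x y. f (complex_of_real x, complex_of_real (y + 2*pi)) = f (complex_of_real x, complex_of_real y)"
  shows "holo2_on f (strip2 R)" "holo2_on (pd0 f) (strip2 R)" "holo2_on (pd1 f) (strip2 R)" "per2 R f"
    "\<And>w. w \<in> strip2 R \<Longrightarrow> opnorm2 (\<lambda>i j. grad f w i j + grad f (ReZ w) i j) 1 2 \<le> M0j f R"
    "\<And>w. w \<in> strip2 R \<Longrightarrow> opnorm2 (hess f w) 2 2 \<le> M1j f R"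
proof -
  obtain U where oU: "open U" and sub: "cstrip2 R \<subseteq> U" and hU: "holo2_on f U"
    using an unfolding analytic2_on_cstrip_def by blast
  have SU: "strip2 R \<subseteq> U" using sub strip2_subset_cstrip2 by blast
  have hU0: "holo2_on (pd0 f) U" by (rule holo2_pd0_holo[OF hU oU])
  have hU1: "holo2_on (pd1 f) U" by (rule holo2_pd1_holo[OF hU oU])
  have hU00: "holo2_on (pd0 (pd0 f)) U" by (rule holo2_pd0_holo[OF hU0 oU])
  have hU10: "holo2_on (pd1 (pd0 f)) U" by (rule holo2_pd1_holo[OF hU0 oU])
  have hU01: "holo2_on (pd0 (pd1 f)) U" by (rule holo2_pd0_holo[OF hU1 oU])
  have hU11: "holo2_on (pd1 (pd1 f)) U" by (rule holo2_pd1_holo[OF hU1 oU])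
  show hS: "holo2_on f (strip2 R)" by (rule holo2_on_subset[OF hU SU])
  show hS0: "holo2_on (pd0 f) (strip2 R)" by (rule holo2_on_subset[OF hU0 SU])
  show hS1: "holo2_on (pd1 f) (strip2 R)" by (rule holo2_on_subset[OF hU1 SU])
  have pc0: "f (w + (complex_of_real (2*pi), 0)) = f w" if w: "w \<in> strip2 R" for w
  proof -
    have h: "holo2_on (\<lambda>w. f (w + (complex_of_real (2*pi), 0)) - f w) (strip2 R)"
      by (intro holo2_diff holo2_shift[OF hU] hS) (use SU strip2_c0 in blast)
    have "f (w + (complex_of_real (2*pi), 0)) - f w = 0"
    proof (rule holo2_zero_on_strip[OF h _ w])
      fix x y :: real
      have "(complex_of_real x, complex_of_real y) + (complex_of_real (2*pi), 0) = (complex_of_real (x + 2*pi), complex_of_real y)"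
        by simp
      then show "f ((complex_of_real x, complex_of_real y) + (complex_of_real (2*pi), 0)) - f (complex_of_real x, complex_of_real y) = 0"
        using per0 by simp
    qed
    then show ?thesis by simp
  qed
  have pc1: "f (w + (0, complex_of_real (2*pi))) = f w" if w: "w \<in> strip2 R" for w
  proof -
    have h: "holo2_on (\<lambda>w. f (w + (0, complex_of_real (2*pi))) - f w) (strip2 R)"
      by (intro holo2_diff holo2_shift[OF hU] hS) (use SU strip2_c1 in blast)
    have "f (w + (0, complex_of_real (2*pi))) - f w = 0"
    proof (rule holo2_zero_on_strip[OF h _ w])
      fix x y :: real
      have "(complex_of_real x, complex_of_real y) + (0, complex_of_real (2*pi)) = (complex_of_real x, complex_of_real (y + 2*pi))"
        by simp
      then show "f ((complex_of_real x, complex_of_real y) + (0, complex_of_real (2*pi))) - f (complex_of_real x, complex_of_real y) = 0"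
        using per1 by simp
    qed
    then show ?thesis by simp
  qed
  show pf: "per2 R f" unfolding per2_def using pc0 pc1 by blast
  have p0: "per2 R (pd0 f)" and p1: "per2 R (pd1 f)" using per2_pd[OF hS pf] by auto
  have p00: "per2 R (pd0 (pd0 f))" and p10: "per2 R (pd1 (pd0 f))" using per2_pd[OF hS0 p0] by auto
  have p01: "per2 R (pd0 (pd1 f))" and p11: "per2 R (pd1 (pd1 f))" using per2_pd[OF hS1 p1] by auto
  obtain B0 where B0: "\<And>w. w \<in> strip2 R \<Longrightarrow> cmod (pd0 f w) \<le> B0"
    using per2_bounded[OF holo2_continuous_on[OF hU0] sub p0] by blast
  obtain B1 where B1: "\<And>w. w \<in> strip2 R \<Longrightarrow> cmod (pd1 f w) \<le> B1"
    using per2_bounded[OF holo2_continuous_on[OF hU1] sub p1] by blast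
  obtain B00 where B00: "\<And>w. w \<in> strip2 R \<Longrightarrow> cmod (pd0 (pd0 f) w) \<le> B00"
    using per2_bounded[OF holo2_continuous_on[OF hU00] sub p00] by blast
  obtain B10 where B10: "\<And>w. w \<in> strip2 R \<Longrightarrow> cmod (pd1 (pd0 f) w) \<le> B10"
    using per2_bounded[OF holo2_continuous_on[OF hU10] sub p10] by blast
  obtain B01 where B01: "\<And>w. w \<in> strip2 R \<Longrightarrow> cmod (pd0 (pd1 f) w) \<le> B01"
    using per2_bounded[OF holo2_continuous_on[OF hU01] sub p01] by blast
  obtain B11 where B11: "\<And>w. w \<in> strip2 R \<Longrightarrow> cmod (pd1 (pd1 f) w) \<le> B11"
    using per2_bounded[OF holo2_continuous_on[OF hU11] sub p11] by blast
  have bddA: "bdd_above ((\<lambda>w. opnorm2 (\<lambda>i j. grad f w i j + grad f (ReZ w) i j) 1 2) ` strip2 R)"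
  proof (rule bdd_aboveI2)
    fix w assume w: "w \<in> strip2 R"
    have wr: "ReZ w \<in> strip2 R" by (rule ReZ_in_strip2[OF w])
    have "opnorm2 (\<lambda>i j. grad f w i j + grad f (ReZ w) i j) 1 2
       \<le> (\<Sum>i<1. \<Sum>j<2. cmod (grad f w i j + grad f (ReZ w) i j))" by (rule opnorm2_le)
    also have "\<dots> = cmod (pd0 f w + pd0 f (ReZ w)) + cmod (pd1 f w + pd1 f (ReZ w))"
      by (simp add: numeral_2_eq_2 grad_def)
    also have "\<dots> \<le> (B0 + B0) + (B1 + B1)"
      by (intro add_mono order_trans[OF norm_triangle_ineq] B0 B1 w wr)
    finally show "opnorm2 (\<lambda>i j. grad f w i j + grad f (ReZ w) i j) 1 2 \<le> (B0 + B0) + (B1 + B1)" .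
  qed
  show "opnorm2 (\<lambda>i j. grad f w i j + grad f (ReZ w) i j) 1 2 \<le> M0j f R" if "w \<in> strip2 R" for w
    unfolding M0j_def by (rule cSUP_upper[OF that bddA])
  have bddB: "bdd_above ((\<lambda>w. opnorm2 (hess f w) 2 2) ` strip2 R)"
  proof (rule bdd_aboveI2)
    fix w assume w: "w \<in> strip2 R"
    have "opnorm2 (hess f w) 2 2 \<le> (\<Sum>i<2. \<Sum>j<2. cmod (hess f w i j))" by (rule opnorm2_le)
    also have "\<dots> = cmod (pd0 (pd0 f) w) + cmod (pd1 (pd0 f) w) + (cmod (pd0 (pd1 f) w) + cmod (pd1 (pd1 f) w))"
      by (simp add: numeral_2_eq_2 hess_def)
    also have "\<dots> \<le> B00 + B10 + (B01 + B11)"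
      by (intro add_mono B00 B10 B01 B11 w)
    finally show "opnorm2 (hess f w) 2 2 \<le> B00 + B10 + (B01 + B11)" .
  qed
  show "opnorm2 (hess f w) 2 2 \<le> M1j f R" if "w \<in> strip2 R" for w
    unfolding M1j_def by (rule cSUP_upper[OF that bddB])
qed

lemma GammaR_norm:
  "norm (GammaR g a - GammaR g e) =
     sqrt (\<Sum>j<3. (Re (g j (complex_of_real (fst a), complex_of_real (snd a))) - Re (g j (complex_of_real (fst e), complex_of_real (snd e))))\<^sup>2)"
  by (simp add: GammaR_def norm_vec_def L2_set_def sum_3 numeral_3_eq_3 power2_abs numeral_2_eq_2)

lemma per2_red:
  assumes p: "per2 R g" and w: "w \<in> strip2 R" and t: "t \<in> I2pi" and s: "s \<in> I2pi"
  shows "g (fst w + complex_of_real t, snd w + complex_of_real s) =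
         g (w + (complex_of_real (if t \<le> pi then t else t - 2*pi), complex_of_real (if s \<le> pi then s else s - 2*pi)))"
proof -
  define t' where "t' = (if t \<le> pi then t else t - 2*pi)"
  define s' where "s' = (if s \<le> pi then s else s - 2*pi)"
  have w1: "w + (complex_of_real t', complex_of_real s') \<in> strip2 R" by (rule strip2_shift[OF w])
  have w2: "w + (complex_of_real t', complex_of_real s) \<in> strip2 R" by (rule strip2_shift[OF w])
  have g0: "g (v + (complex_of_real (2*pi), 0)) = g v" if "v \<in> strip2 R" for v using p that by (auto simp: per2_def)
  have g1: "g (v + (0, complex_of_real (2*pi))) = g v" if "v \<in> strip2 R" for v using p that by (auto simp: per2_def)
  have A: "g (fst w + complex_of_real t, snd w + complex_of_real s) = g (w + (complex_of_real t', complex_of_real s))"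
  proof (cases "t \<le> pi")
    case True then show ?thesis by (simp add: t'_def plus_prod_def)
  next
    case False
    have "(fst w + complex_of_real t, snd w + complex_of_real s) = (w + (complex_of_real t', complex_of_real s)) + (complex_of_real (2*pi), 0)"
      using False by (simp add: t'_def plus_prod_def)
    then show ?thesis using g0[OF w2] by simp
  qed
  have B: "g (w + (complex_of_real t', complex_of_real s)) = g (w + (complex_of_real t', complex_of_real s'))"
  proof (cases "s \<le> pi")
    case True then show ?thesis by (simp add: s'_def)
  next
    case False
    have eq: "w + (complex_of_real t', complex_of_real s) = (w + (complex_of_real t', complex_of_real s')) + (0, complex_of_real (2*pi))"
      using False by (simp add: s'_def plus_prod_def)
    show ?thesis unfolding eq by (rule g1[OF w1])
  qed
  show ?thesis using A B by (simp add: t'_def s'_def)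
qed

lemma md_I2pi: "x - 2*pi * of_int \<lfloor>x / (2*pi)\<rfloor> \<in> I2pi"
  using floor_mod_bounds[of "2*pi" x] by (simp add: I2pi_def)

lemma dist2pi_md:
  assumes "\<bar>t\<bar> \<le> pi"
  shows "dist2pi ((a - 2*pi * of_int \<lfloor>a / (2*pi)\<rfloor>) - ((a + t) - 2*pi * of_int \<lfloor>(a + t) / (2*pi)\<rfloor>)) = \<bar>t\<bar>"
proof -
  define m where "m = \<lfloor>(a + t) / (2*pi)\<rfloor> - \<lfloor>a / (2*pi)\<rfloor>"
  have e: "(a - 2*pi * of_int \<lfloor>a / (2*pi)\<rfloor>) - ((a + t) - 2*pi * of_int \<lfloor>(a + t) / (2*pi)\<rfloor>)
      = - t + 2*pi * real_of_int m"
    by (simp add: m_def algebra_simps)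
  have "dist2pi ((a - 2*pi * of_int \<lfloor>a / (2*pi)\<rfloor>) - ((a + t) - 2*pi * of_int \<lfloor>(a + t) / (2*pi)\<rfloor>))
      = dist2pi (- t + 2*pi * real_of_int m)" by (simp only: e)
  also have "\<dots> = dist2pi (- t)" by (rule dist2pi_shift)
  also have "\<dots> = dist2pi t" by (rule dist2pi_minus)
  also have "\<dots> = \<bar>t\<bar>" by (rule dist2pi_small[OF assms])
  finally show ?thesis .
qed

theorem lemma2:
  fixes \<gamma> :: "nat \<Rightarrow> complex \<times> complex \<Rightarrow> complex"
    and C0 R0 b :: real
    and \<Omega> :: "(real^3) set"
  defines "M0 \<equiv> sqrt (\<Sum>j<3. (M0j (\<gamma> j) R0)\<^sup>2)"
    and "M1 \<equiv> sqrt (\<Sum>j<3. (M1j (\<gamma> j) R0)\<^sup>2)"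
  defines "bmax \<equiv> min (C0\<^sup>2 / (sqrt 2 * M0 * M1)) (R0 / 2)"
  defines "bstar \<equiv> (b + bmax) / 2"
  defines "C1 \<equiv> C0\<^sup>2 - sqrt 2 * M0 * M1 * bstar"
  assumes real_on_reals: "\<And>j x y. j < 3 \<Longrightarrow> \<gamma> j (complex_of_real x, complex_of_real y) \<in> \<real>"
    and periodic0: "\<And>j x y. j < 3 \<Longrightarrow>
          \<gamma> j (complex_of_real (x + 2*pi), complex_of_real y) = \<gamma> j (complex_of_real x, complex_of_real y)"
    and periodic1: "\<And>j x y. j < 3 \<Longrightarrow>
          \<gamma> j (complex_of_real x, complex_of_real (y + 2*pi)) = \<gamma> j (complex_of_real x, complex_of_real y)"
    and region: "open \<Omega>" "bounded \<Omega>" "frontier \<Omega> = GammaR \<gamma> ` (I2pi \<times> I2pi)"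
      "diffeomorphic_Cinf \<Omega> solid_torus"
    and C0_pos: "C0 > 0"
    and A1: "\<And>th et. th \<in> I2pi \<times> I2pi \<Longrightarrow> et \<in> I2pi \<times> I2pi \<Longrightarrow>
          norm (GammaR \<gamma> th - GammaR \<gamma> et) \<ge> C0 * zeta (fst th - fst et, snd th - snd et)"
    and R0_pos: "R0 > 0"
    and A2: "\<And>j. j < 3 \<Longrightarrow> analytic2_on_cstrip (\<gamma> j) R0"
    and b_pos: "0 < b" and b_lt: "b < bmax"
  shows "\<forall>z \<in> strip2 bstar. \<forall>th \<in> I2pi \<times> I2pi.
           cmod (\<Sum>j<3. (\<gamma> j z - \<gamma> j (fst z + complex_of_real (fst th), snd z + complex_of_real (snd th)))\<^sup>2)
             \<ge> C1 * (zeta th)\<^sup>2"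
proof (intro ballI)
  fix z th
  assume zS: "z \<in> strip2 bstar" and th: "th \<in> I2pi \<times> I2pi"
  have bmax_le: "bmax \<le> R0 / 2" unfolding bmax_def by (rule min.cobounded2)
  have bstar_lt: "bstar < bmax" unfolding bstar_def using b_lt by simp
  have bstar_pos: "0 < bstar" unfolding bstar_def using b_pos b_lt by simp
  have bstar_R0: "bstar < R0" using bstar_lt bmax_le R0_pos by linarith
  have zR: "z \<in> strip2 R0" using zS bstar_R0 by (auto simp: strip2_def)
  have cf: "holo2_on (\<gamma> j) (strip2 R0) \<and> holo2_on (pd0 (\<gamma> j)) (strip2 R0) \<and> holo2_on (pd1 (\<gamma> j)) (strip2 R0)
      \<and> per2 R0 (\<gamma> j)
      \<and> (\<forall>w\<in>strip2 R0. opnorm2 (\<lambda>i k. grad (\<gamma> j) w i k + grad (\<gamma> j) (ReZ w) i k) 1 2 \<le> M0j (\<gamma> j) R0)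
      \<and> (\<forall>w\<in>strip2 R0. opnorm2 (hess (\<gamma> j) w) 2 2 \<le> M1j (\<gamma> j) R0)" if j: "j < 3" for j
    using component_facts[OF A2[OF j] periodic0[OF j] periodic1[OF j]] by blast
  define t0 where "t0 = (if fst th \<le> pi then fst th else fst th - 2*pi)"
  define t1 where "t1 = (if snd th \<le> pi then snd th else snd th - 2*pi)"
  have th0: "fst th \<in> I2pi" "snd th \<in> I2pi" using th by auto
  have t0b: "\<bar>t0\<bar> \<le> pi" "dist2pi (fst th) = \<bar>t0\<bar>" using dist2pi_I2pi[OF th0(1)] by (simp_all add: t0_def)
  have t1b: "\<bar>t1\<bar> \<le> pi" "dist2pi (snd th) = \<bar>t1\<bar>" using dist2pi_I2pi[OF th0(2)] by (simp_all add: t1_def)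
  define \<zeta> where "\<zeta> = sqrt (t0\<^sup>2 + t1\<^sup>2)"
  have zeta_eq: "zeta th = \<zeta>" unfolding zeta_def \<zeta>_def using t0b t1b by simp
  have zeta_nn: "0 \<le> \<zeta>" unfolding \<zeta>_def by simp
  define \<theta> where "\<theta> = (complex_of_real t0, complex_of_real t1)"
  define X where "X = ReZ z"
  define F where "F = (\<lambda>j w. \<gamma> j w - \<gamma> j (w + \<theta>))"
  have shift: "\<gamma> j (fst z + complex_of_real (fst th), snd z + complex_of_real (snd th)) = \<gamma> j (z + \<theta>)" if j: "j < 3" for j
    using per2_red[of R0 "\<gamma> j" z "fst th" "snd th"] cf[OF j] zR th0 by (simp add: \<theta>_def t0_def t1_def)
  have lhs_eq: "(\<Sum>j<3. (\<gamma> j z - \<gamma> j (fst z + complex_of_real (fst th), snd z + complex_of_real (snd th)))\<^sup>2)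
      = (\<Sum>j<3. (F j z)\<^sup>2)"
    by (rule sum.cong) (auto simp: F_def shift)
  define a0 where "a0 = Re (fst z)"
  define a1 where "a1 = Re (snd z)"
  define md where "md = (\<lambda>x::real. x - 2*pi * of_int \<lfloor>x / (2*pi)\<rfloor>)"
  have XE: "X = (complex_of_real a0, complex_of_real a1)" "X + \<theta> = (complex_of_real (a0 + t0), complex_of_real (a1 + t1))"
    by (simp_all add: X_def ReZ_def \<theta>_def a0_def a1_def)
  have red1: "\<gamma> j X = \<gamma> j (complex_of_real (md a0), complex_of_real (md a1))" if j: "j < 3" for j
    unfolding XE md_def by (rule per2_real_reduce) (use cf[OF j] R0_pos in auto)
  have red2: "\<gamma> j (X + \<theta>) = \<gamma> j (complex_of_real (md (a0 + t0)), complex_of_real (md (a1 + t1)))" if j: "j < 3" for j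
    unfolding XE(2) md_def by (rule per2_real_reduce) (use cf[OF j] R0_pos in auto)
  have FXreal: "F j X = complex_of_real (Re (F j X))" if j: "j < 3" for j
  proof -
    have "\<gamma> j X \<in> \<real>" unfolding XE by (rule real_on_reals[OF j])
    moreover have "\<gamma> j (X + \<theta>) \<in> \<real>" unfolding XE(2) by (rule real_on_reals[OF j])
    ultimately have "F j X \<in> \<real>" unfolding F_def by (rule Reals_diff)
    then show ?thesis by (simp add: of_real_Re)
  qed
  define pA where "pA = (md a0, md a1)"
  define pE where "pE = (md (a0 + t0), md (a1 + t1))"
  have pA: "pA \<in> I2pi \<times> I2pi" unfolding pA_def md_def using md_I2pi by auto
  have pE: "pE \<in> I2pi \<times> I2pi" unfolding pE_def md_def using md_I2pi by auto
  have zA: "zeta (fst pA - fst pE, snd pA - snd pE) = \<zeta>"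
    unfolding zeta_def \<zeta>_def pA_def pE_def md_def
    using dist2pi_md[OF t0b(1), of a0] dist2pi_md[OF t1b(1), of a1] by simp
  have nA: "norm (GammaR \<gamma> pA - GammaR \<gamma> pE) = sqrt (\<Sum>j<3. (Re (F j X))\<^sup>2)"
    unfolding GammaR_norm
  proof (rule arg_cong[where f=sqrt], rule sum.cong)
    fix j assume "j \<in> {..<3::nat}"
    then have j: "j < 3" by simp
    show "(Re (\<gamma> j (complex_of_real (fst pA), complex_of_real (snd pA))) - Re (\<gamma> j (complex_of_real (fst pE), complex_of_real (snd pE))))\<^sup>2
        = (Re (F j X))\<^sup>2"
      by (simp add: F_def red1[OF j] red2[OF j] pA_def pE_def)
  qed simp
  have lowR: "C0 * \<zeta> \<le> sqrt (\<Sum>j<3. (Re (F j X))\<^sup>2)"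
    using A1[OF pA pE] zA nA by simp
  have Snn: "0 \<le> (\<Sum>j<3. (Re (F j X))\<^sup>2)" by (intro sum_nonneg) simp
  have low: "C0\<^sup>2 * \<zeta>\<^sup>2 \<le> (\<Sum>j<3. (Re (F j X))\<^sup>2)"
  proof -
    have "(C0 * \<zeta>)\<^sup>2 \<le> (sqrt (\<Sum>j<3. (Re (F j X))\<^sup>2))\<^sup>2"
      by (rule power_mono[OF lowR]) (use C0_pos zeta_nn in simp)
    then show ?thesis using Snn by (simp add: power_mult_distrib)
  qed
  have DX: "(\<Sum>j<3. (F j X)\<^sup>2) = complex_of_real (\<Sum>j<3. (Re (F j X))\<^sup>2)"
  proof -
    have "(\<Sum>j<3. (F j X)\<^sup>2) = (\<Sum>j<3. complex_of_real ((Re (F j X))\<^sup>2))"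
    proof (rule sum.cong)
      fix j assume "j \<in> {..<3::nat}"
      then have j: "j < 3" by simp
      show "(F j X)\<^sup>2 = complex_of_real ((Re (F j X))\<^sup>2)"
        by (subst FXreal[OF j]) simp
    qed simp
    then show ?thesis by simp
  qed
  define yn where "yn = sqrt ((Im (fst z))\<^sup>2 + (Im (snd z))\<^sup>2)"
  have BA: "cmod (F j z + F j X) \<le> M0j (\<gamma> j) R0 * \<zeta>" if j: "j < 3" for j
  proof -
    have h: "holo2_on (\<gamma> j) (strip2 R0)" and m: "\<And>w. w \<in> strip2 R0 \<Longrightarrow> opnorm2 (\<lambda>i k. grad (\<gamma> j) w i k + grad (\<gamma> j) (ReZ w) i k) 1 2 \<le> M0j (\<gamma> j) R0"
      using cf[OF j] by auto
    from comp_BA[OF h m zR, of t0 t1] show ?thesis by (simp add: F_def \<theta>_def X_def \<zeta>_def)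
  qed
  have BB: "cmod (F j z - F j X) \<le> M1j (\<gamma> j) R0 * yn * \<zeta>" if j: "j < 3" for j
  proof -
    have h: "holo2_on (\<gamma> j) (strip2 R0)" "holo2_on (pd0 (\<gamma> j)) (strip2 R0)" "holo2_on (pd1 (\<gamma> j)) (strip2 R0)"
      and m: "\<And>w. w \<in> strip2 R0 \<Longrightarrow> opnorm2 (hess (\<gamma> j) w) 2 2 \<le> M1j (\<gamma> j) R0"
      using cf[OF j] by auto
    from comp_BB[OF h m zR, of t0 t1] show ?thesis by (simp add: F_def \<theta>_def X_def \<zeta>_def yn_def)
  qed
  have prodb: "cmod ((F j z - F j X) * (F j z + F j X)) \<le> (M1j (\<gamma> j) R0 * yn * \<zeta>) * (M0j (\<gamma> j) R0 * \<zeta>)"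
    if j: "j < 3" for j
  proof -
    have "0 \<le> M1j (\<gamma> j) R0 * yn * \<zeta>" using BB[OF j] norm_ge_zero order_trans by blast
    then show ?thesis unfolding norm_mult by (intro mult_mono BB[OF j] BA[OF j]) auto
  qed
  have diff: "(\<Sum>j<3. (F j z)\<^sup>2) - (\<Sum>j<3. (F j X)\<^sup>2) = (\<Sum>j<3. (F j z - F j X) * (F j z + F j X))"
  proof -
    have "(\<Sum>j<3. (F j z)\<^sup>2) - (\<Sum>j<3. (F j X)\<^sup>2) = (\<Sum>j<3. (F j z)\<^sup>2 - (F j X)\<^sup>2)"
      by (rule sum_subtractf[symmetric])
    also have "\<dots> = (\<Sum>j<3. (F j z - F j X) * (F j z + F j X))"
      by (rule sum.cong) (simp_all add: power2_eq_square algebra_simps)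
    finally show ?thesis .
  qed
  have dnorm: "cmod ((\<Sum>j<3. (F j z)\<^sup>2) - (\<Sum>j<3. (F j X)\<^sup>2)) \<le> (\<Sum>j<3. (M1j (\<gamma> j) R0 * yn * \<zeta>) * (M0j (\<gamma> j) R0 * \<zeta>))"
    unfolding diff
    by (rule order_trans[OF norm_sum]) (rule sum_mono, simp add: prodb)
  have re: "(\<Sum>j<3. (M1j (\<gamma> j) R0 * yn * \<zeta>) * (M0j (\<gamma> j) R0 * \<zeta>)) = yn * \<zeta>\<^sup>2 * (\<Sum>j<3. M0j (\<gamma> j) R0 * M1j (\<gamma> j) R0)"
    unfolding sum_distrib_left by (rule sum.cong) (simp_all add: power2_eq_square)
  have cs: "(\<Sum>j<3. M0j (\<gamma> j) R0 * M1j (\<gamma> j) R0) \<le> M0 * M1"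
    unfolding M0_def M1_def by (rule cs3)
  have yn_nn: "0 \<le> yn" unfolding yn_def by simp
  have yn_le: "yn \<le> sqrt 2 * bstar"
  proof -
    have i0: "\<bar>Im (fst z)\<bar> < bstar" and i1: "\<bar>Im (snd z)\<bar> < bstar" using zS by (auto simp: strip2_def)
    have "(Im (fst z))\<^sup>2 \<le> bstar\<^sup>2"
      using power_mono[OF less_imp_le[OF i0], of 2] by simp
    moreover have "(Im (snd z))\<^sup>2 \<le> bstar\<^sup>2"
      using power_mono[OF less_imp_le[OF i1], of 2] by simp
    ultimately have "(Im (fst z))\<^sup>2 + (Im (snd z))\<^sup>2 \<le> 2 * bstar\<^sup>2" by simp
    then have "yn \<le> sqrt (2 * bstar\<^sup>2)" unfolding yn_def by (rule real_sqrt_le_mono)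
    also have "\<dots> = sqrt 2 * bstar" using bstar_pos by (simp add: real_sqrt_mult)
    finally show ?thesis .
  qed
  have M0M1: "0 \<le> M0 * M1" unfolding M0_def M1_def
    by (intro mult_nonneg_nonneg real_sqrt_ge_zero sum_nonneg) simp_all
  have err: "(\<Sum>j<3. (M1j (\<gamma> j) R0 * yn * \<zeta>) * (M0j (\<gamma> j) R0 * \<zeta>)) \<le> sqrt 2 * M0 * M1 * bstar * \<zeta>\<^sup>2"
  proof -
    have "yn * \<zeta>\<^sup>2 * (\<Sum>j<3. M0j (\<gamma> j) R0 * M1j (\<gamma> j) R0) \<le> yn * \<zeta>\<^sup>2 * (M0 * M1)"
      by (rule mult_left_mono[OF cs]) (simp add: yn_nn)
    also have "\<dots> \<le> (sqrt 2 * bstar) * \<zeta>\<^sup>2 * (M0 * M1)"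
      using yn_le M0M1 by (intro mult_right_mono) auto
    finally show ?thesis unfolding re by (simp add: algebra_simps)
  qed
  have "cmod (\<Sum>j<3. (F j X)\<^sup>2) - cmod ((\<Sum>j<3. (F j X)\<^sup>2) - (\<Sum>j<3. (F j z)\<^sup>2)) \<le> cmod (\<Sum>j<3. (F j z)\<^sup>2)"
    using norm_triangle_ineq2[of "\<Sum>j<3. (F j X)\<^sup>2" "\<Sum>j<3. (F j z)\<^sup>2"] by simp
  moreover have "cmod (\<Sum>j<3. (F j X)\<^sup>2) = (\<Sum>j<3. (Re (F j X))\<^sup>2)"
    unfolding DX norm_of_real by (rule abs_of_nonneg[OF Snn])
  moreover have "cmod ((\<Sum>j<3. (F j X)\<^sup>2) - (\<Sum>j<3. (F j z)\<^sup>2)) = cmod ((\<Sum>j<3. (F j z)\<^sup>2) - (\<Sum>j<3. (F j X)\<^sup>2))"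
    by (rule norm_minus_commute)
  ultimately have "C0\<^sup>2 * \<zeta>\<^sup>2 - sqrt 2 * M0 * M1 * bstar * \<zeta>\<^sup>2 \<le> cmod (\<Sum>j<3. (F j z)\<^sup>2)"
    using low dnorm err by linarith
  then show "C1 * (zeta th)\<^sup>2 \<le> cmod (\<Sum>j<3. (\<gamma> j z - \<gamma> j (fst z + complex_of_real (fst th), snd z + complex_of_real (snd th)))\<^sup>2)"
    unfolding lhs_eq zeta_eq C1_def by (simp add: algebra_simps)
qed

end
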